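(* Let $X$ be a locally compact Polish space and $\nu$ a non-atomic Radon measure on $X$. Let $K$ be a bounded, self-adjoint operator on the real Hilbert space $L^2(X,\nu)$ with $K\ge 0$ which is locally of trace class, and let $\varkappa(x,y)$ be the integral kernel of $\sqrt K$ and $k(x,y)=\int_X\varkappa(x,z)\varkappa(y,z)\,\nu(dz)$ the corresponding integral kernel of $K$. Then there exists a random field $(Y(x))_{x\in X}$ on a probability space $(\Omega,\mathcal A,P)$ such that the mapping $X\times\Omega\ni(x,\omega)\mapsto Y(x,\omega)$ is measurable, for $\nu$-a.a. $x\in X$ the random variable $Y(x)$ is Gaussian with mean $0$, and $$\mathbb E\big(Y(x)Y(y)\big)=k(x,y)$$ for $\nu^{\otimes 2}$-a.a. $(x,y)\in X^2$ and for $\nu$-a.a. $x=y\in X$.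
   Context: $\mathcal B_0(X)$ denotes the family of relatively compact Borel subsets of $X$. "Locally of trace class" means $\operatorname{Tr}(P_\Lambda K P_\Lambda)<\infty$ for every $\Lambda\in\mathcal B_0(X)$, where $P_\Lambda$ is the operator of multiplication by the indicator $\chi_\Lambda$. Under these assumptions $\sqrt K$ is an integral operator whose kernel $\varkappa$ satisfies $\int_\Lambda\int_X\varkappa(x,y)^2\,\nu(dx)\nu(dy)<\infty$ for all $\Lambda\in\mathcal B_0(X)$ (so $\varkappa(x,\cdot)\in L^2(X,\nu)$ for $\nu$-a.a. $x$), and $K$ is an integral operator with kernel $k(x,y)=(\varkappa(x,\cdot),\varkappa(y,\cdot))_{L^2(X,\nu)}$. *)

theory Defs
  imports "HOL-Probability.Probability"
begin

text \<open>Radon measure on a locally compact Polish space: Borel measure, finite on compact sets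
  (on Polish spaces locally finite Borel measures are automatically Radon).\<close>
definition radon_measure :: "'a::topological_space measure \<Rightarrow> bool" where
  "radon_measure \<nu> \<longleftrightarrow> sets \<nu> = sets borel \<and> (\<forall>C. compact C \<longrightarrow> emeasure \<nu> C < \<infinity>)"

definition non_atomic :: "'a measure \<Rightarrow> bool" where
  "non_atomic \<nu> \<longleftrightarrow> (\<forall>x. {x} \<in> sets \<nu> \<and> emeasure \<nu> {x} = 0)"

definition rel_compact_borel :: "'a::topological_space set set" where
  "rel_compact_borel = {L. L \<in> sets borel \<and> compact (closure L)}"

definition sq_integrable :: "'a measure \<Rightarrow> ('a \<Rightarrow> real) \<Rightarrow> bool" where
  "sq_integrable M f \<longleftrightarrow> f \<in> borel_measurable M \<and> integrable M (\<lambda>x. (f x)\<^sup>2)"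

definition int_op :: "'a measure \<Rightarrow> ('a \<Rightarrow> 'a \<Rightarrow> real) \<Rightarrow> ('a \<Rightarrow> real) \<Rightarrow> 'a \<Rightarrow> real" where
  "int_op M q f = (\<lambda>x. \<integral>y. q x y * f y \<partial>M)"

text \<open>q is the integral kernel of a bounded, self-adjoint, nonnegative operator on L^2(M)
  (this is the operator sqrt K).\<close>
definition bounded_sa_nonneg_kernel :: "'a measure \<Rightarrow> ('a \<Rightarrow> 'a \<Rightarrow> real) \<Rightarrow> bool" where
  "bounded_sa_nonneg_kernel M q \<longleftrightarrow>
     (\<lambda>(x,y). q x y) \<in> borel_measurable (M \<Otimes>\<^sub>M M) \<and>
     (AE z in M \<Otimes>\<^sub>M M. q (fst z) (snd z) = q (snd z) (fst z)) \<and>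
     (\<exists>C. \<forall>f. sq_integrable M f \<longrightarrow>
        (AE x in M. integrable M (\<lambda>y. q x y * f y)) \<and>
        sq_integrable M (int_op M q f) \<and>
        (\<integral>x. (int_op M q f x)\<^sup>2 \<partial>M) \<le> C * (\<integral>x. (f x)\<^sup>2 \<partial>M)) \<and>
     (\<forall>f. sq_integrable M f \<longrightarrow> (\<integral>x. f x * int_op M q f x \<partial>M) \<ge> 0)"

text \<open>K = (sqrt K)^2 locally of trace class: Tr(P_L K P_L) = int_L int_X q(x,y)^2 < infinity.\<close>
definition locally_trace_class_sqrt_kernel :: "'a::topological_space measure \<Rightarrow> ('a \<Rightarrow> 'a \<Rightarrow> real) \<Rightarrow> bool" where
  "locally_trace_class_sqrt_kernel M q \<longleftrightarrow>
     (\<forall>L\<in>rel_compact_borel. (\<integral>\<^sup>+x. indicator L x * (\<integral>\<^sup>+y. ennreal ((q x y)\<^sup>2) \<partial>M) \<partial>M) < \<infinity>)"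

definition square_kernel :: "'a measure \<Rightarrow> ('a \<Rightarrow> 'a \<Rightarrow> real) \<Rightarrow> 'a \<Rightarrow> 'a \<Rightarrow> real" where
  "square_kernel M q x y = (\<integral>z. q x z * q y z \<partial>M)"

definition centered_gaussian :: "'b measure \<Rightarrow> ('b \<Rightarrow> real) \<Rightarrow> bool" where
  "centered_gaussian P Z \<longleftrightarrow> Z \<in> borel_measurable P \<and>
     (\<exists>\<sigma>\<ge>0. distr P borel Z =
        (if \<sigma> = 0 then return borel 0 else density lborel (normal_density 0 \<sigma>)))"

end

theory Submission
  imports Defs
begin


lemma sqi_meas[measurable_dest]: "sq_integrable M f \<Longrightarrow> f \<in> borel_measurable M"
  by (simp add: sq_integrable_def)

lemma sqi_int: "sq_integrable M f \<Longrightarrow> integrable M (\<lambda>x. (f x)\<^sup>2)"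
  by (simp add: sq_integrable_def)

lemma sqi_mult:
  assumes "sq_integrable M f" "sq_integrable M g"
  shows "integrable M (\<lambda>x. f x * g x)"
proof (rule Bochner_Integration.integrable_bound)
  show "integrable M (\<lambda>x. ((f x)\<^sup>2 + (g x)\<^sup>2)/2)"
    using assms by (auto simp: sq_integrable_def)
  show "(\<lambda>x. f x * g x) \<in> borel_measurable M" using assms by (auto simp: sq_integrable_def)
  show "AE x in M. norm (f x * g x) \<le> norm (((f x)\<^sup>2 + (g x)\<^sup>2)/2)"
  proof (rule AE_I2)
    fix x
    have "2 * \<bar>f x * g x\<bar> \<le> (f x)\<^sup>2 + (g x)\<^sup>2"
    proof -
      have "0 \<le> (\<bar>f x\<bar> - \<bar>g x\<bar>)\<^sup>2" by simp
      then show ?thesis by (simp add: power2_eq_square algebra_simps abs_mult)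
    qed
    then show "norm (f x * g x) \<le> norm (((f x)\<^sup>2 + (g x)\<^sup>2)/2)" by auto
  qed
qed

lemma sqi_add:
  assumes "sq_integrable M f" "sq_integrable M g"
  shows "sq_integrable M (\<lambda>x. f x + g x)"
proof -
  have "integrable M (\<lambda>x. (f x)\<^sup>2 + 2 * (f x * g x) + (g x)\<^sup>2)"
    using assms sqi_mult[OF assms] by (auto simp: sq_integrable_def)
  then show ?thesis using assms by (auto simp: sq_integrable_def power2_sum algebra_simps)
qed

lemma sqi_scale:
  assumes "sq_integrable M f"
  shows "sq_integrable M (\<lambda>x. c * f x)"
  using assms by (auto simp: sq_integrable_def power_mult_distrib)

lemma sqi_minus:
  assumes "sq_integrable M f" "sq_integrable M g"
  shows "sq_integrable M (\<lambda>x. f x - g x)"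
  using sqi_add[OF assms(1) sqi_scale[OF assms(2), of "-1"]] by simp

lemma sqi_zero: "sq_integrable M (\<lambda>x. 0)"
  by (simp add: sq_integrable_def)

lemma sqi_sum:
  assumes "\<And>i. i \<in> A \<Longrightarrow> sq_integrable M (f i)"
  shows "sq_integrable M (\<lambda>x. \<Sum>i\<in>A. f i x)"
  using assms
proof (induction A rule: infinite_finite_induct)
  case (insert a A) then show ?case using sqi_add[of M "f a" "\<lambda>x. \<Sum>i\<in>A. f i x"] by simp
qed (auto simp: sqi_zero)

lemma sqi_indicator:
  assumes "A \<in> sets M" "emeasure M A < \<infinity>"
  shows "sq_integrable M (indicator A :: _ \<Rightarrow> real)"
proof -
  have "(\<lambda>x. (indicator A x :: real)\<^sup>2) = indicator A"
    by (auto simp: indicator_def)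
  then show ?thesis using assms
    by (auto simp: sq_integrable_def intro!: integrable_real_indicator)
qed

locale orth_sys =
  fixes M :: "'b measure" and f :: "nat \<Rightarrow> 'b \<Rightarrow> real"
  assumes sqi_f: "\<And>n. sq_integrable M (f n)"
    and orth: "\<And>n m. n \<noteq> m \<Longrightarrow> (\<integral>x. f n x * f m x \<partial>M) = 0"
    and nrm: "\<And>n. (\<integral>x. (f n x)\<^sup>2 \<partial>M) \<le> 1"
begin

lemma f_meas[measurable]: "f n \<in> borel_measurable M"
  using sqi_f by (simp add: sq_integrable_def)

lemma sum_sq:
  assumes "finite A"
  shows "(\<integral>x. (\<Sum>n\<in>A. a n * f n x)\<^sup>2 \<partial>M) = (\<Sum>n\<in>A. (a n)\<^sup>2 * (\<integral>x. (f n x)\<^sup>2 \<partial>M))"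
proof -
  have "(\<integral>x. (\<Sum>n\<in>A. a n * f n x)\<^sup>2 \<partial>M) = (\<integral>x. (\<Sum>n\<in>A. \<Sum>m\<in>A. a n * a m * (f n x * f m x)) \<partial>M)"
    by (simp add: power2_eq_square sum_product algebra_simps)
  also have "\<dots> = (\<Sum>n\<in>A. \<Sum>m\<in>A. a n * a m * (\<integral>x. f n x * f m x \<partial>M))"
    by (simp add: integral_sum sqi_mult[OF sqi_f sqi_f] integrable_sum)
  also have "\<dots> = (\<Sum>n\<in>A. a n * a n * (\<integral>x. f n x * f n x \<partial>M))"
  proof (rule sum.cong[OF refl])
    fix n assume "n \<in> A"
    have "(\<Sum>m\<in>A. a n * a m * (\<integral>x. f n x * f m x \<partial>M)) =
      (\<Sum>m\<in>A. if m = n then a n * a m * (\<integral>x. f n x * f m x \<partial>M) else 0)"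
      by (rule sum.cong) (auto simp: orth)
    also have "\<dots> = a n * a n * (\<integral>x. f n x * f n x \<partial>M)"
      using \<open>n \<in> A\<close> assms by (simp add: sum.delta')
    finally show "(\<Sum>m\<in>A. a n * a m * (\<integral>x. f n x * f m x \<partial>M)) = a n * a n * (\<integral>x. f n x * f n x \<partial>M)" .
  qed
  finally show ?thesis by (simp add: power2_eq_square)
qed

lemma sum_sq_le:
  assumes "finite A"
  shows "(\<integral>x. (\<Sum>n\<in>A. a n * f n x)\<^sup>2 \<partial>M) \<le> (\<Sum>n\<in>A. (a n)\<^sup>2)"
  unfolding sum_sq[OF assms]
  by (intro sum_mono) (simp add: mult_left_le nrm)

lemma sum_sq_nn:
  assumes "finite A"
  shows "(\<integral>\<^sup>+x. ennreal ((\<Sum>n\<in>A. a n * f n x)\<^sup>2) \<partial>M) \<le> ennreal (\<Sum>n\<in>A. (a n)\<^sup>2)"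
proof -
  have "integrable M (\<lambda>x. (\<Sum>n\<in>A. a n * f n x)\<^sup>2)"
    using sqi_sum[of A M "\<lambda>n x. a n * f n x"] sqi_scale[OF sqi_f] by (simp add: sq_integrable_def)
  then have "(\<integral>\<^sup>+x. ennreal ((\<Sum>n\<in>A. a n * f n x)\<^sup>2) \<partial>M) = ennreal (\<integral>x. (\<Sum>n\<in>A. a n * f n x)\<^sup>2 \<partial>M)"
    by (intro nn_integral_eq_integral) auto
  then show ?thesis using sum_sq_le[OF assms] by (simp add: ennreal_leI)
qed

end



definition NN :: "(nat \<Rightarrow> real) \<Rightarrow> nat \<Rightarrow> nat" where
  "NN a j = (LEAST N. \<forall>m. (\<Sum>n\<in>{N..<m}. (a n)\<^sup>2) \<le> (1/16)^j)"

definition PS :: "(nat \<Rightarrow> real) \<Rightarrow> (nat \<Rightarrow> 'b \<Rightarrow> real) \<Rightarrow> nat \<Rightarrow> 'b \<Rightarrow> real" where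
  "PS a f N x = (\<Sum>n<N. a n * f n x)"

definition RF :: "(nat \<Rightarrow> real) \<Rightarrow> (nat \<Rightarrow> 'b \<Rightarrow> real) \<Rightarrow> 'b \<Rightarrow> real" where
  "RF a f x = lim (\<lambda>j. PS a f (NN a j) x)"

lemma tail_small:
  assumes "summable (\<lambda>n. (a n)\<^sup>2)" "(r::real) > 0"
  shows "\<exists>N0. \<forall>N\<ge>N0. \<forall>m. (\<Sum>n\<in>{N..<m}. (a n)\<^sup>2) \<le> r"
proof -
  from assms obtain N0 where N0: "\<forall>N\<ge>N0. \<forall>m. norm (\<Sum>n\<in>{N..<m}. (a n)\<^sup>2) < r"
    unfolding summable_Cauchy by blast
  have "(\<Sum>n\<in>{N..<m}. (a n)\<^sup>2) \<le> r" if "N \<ge> N0" for N m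
  proof -
    have "norm (\<Sum>n\<in>{N..<m}. (a n)\<^sup>2) < r" using N0 that by blast
    then show ?thesis by simp
  qed
  then show ?thesis by blast
qed

lemma NN_prop:
  assumes "summable (\<lambda>n. (a n)\<^sup>2)"
  shows "(\<Sum>n\<in>{NN a j..<m}. (a n)\<^sup>2) \<le> (1/16)^j"
proof -
  obtain N0 where "\<forall>m. (\<Sum>n\<in>{N0..<m}. (a n)\<^sup>2) \<le> (1/16)^j"
    using tail_small[OF assms, of "(1/16)^j"] by auto
  then have "\<forall>m. (\<Sum>n\<in>{NN a j..<m}. (a n)\<^sup>2) \<le> (1/16)^j"
    unfolding NN_def by (rule LeastI)
  then show ?thesis by blast
qed

lemma NN_mono:
  assumes "summable (\<lambda>n. (a n)\<^sup>2)"
  shows "NN a j \<le> NN a (Suc j)"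
proof -
  have "\<forall>m. (\<Sum>n\<in>{NN a (Suc j)..<m}. (a n)\<^sup>2) \<le> (1/16)^j"
  proof
    fix m
    have "(\<Sum>n\<in>{NN a (Suc j)..<m}. (a n)\<^sup>2) \<le> (1/16)^(Suc j)" by (rule NN_prop[OF assms])
    also have "\<dots> \<le> (1/16)^j" by (simp add: power_decreasing)
    finally show "(\<Sum>n\<in>{NN a (Suc j)..<m}. (a n)\<^sup>2) \<le> (1/16)^j" .
  qed
  then show ?thesis unfolding NN_def[of a j] by (rule Least_le)
qed

lemma PS_diff:
  assumes "N \<le> N'"
  shows "PS a f N' x - PS a f N x = (\<Sum>n\<in>{N..<N'}. a n * f n x)"
proof -
  have "{..<N'} = {..<N} \<union> {N..<N'}" using assms by auto
  then show ?thesis unfolding PS_def by (simp add: sum.union_disjoint ivl_disj_int)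
qed

context orth_sys
begin

lemma PS_meas[measurable]: "PS a f N \<in> borel_measurable M"
  unfolding PS_def by measurable

lemma RF_meas[measurable]: "RF a f \<in> borel_measurable M"
  unfolding RF_def by measurable

lemma block_bound:
  assumes "summable (\<lambda>n. (a n)\<^sup>2)"
  shows "(\<integral>\<^sup>+x. ennreal ((PS a f (NN a (Suc j)) x - PS a f (NN a j) x)\<^sup>2) \<partial>M) \<le> ennreal ((1/16)^j)"
proof -
  have "(\<integral>\<^sup>+x. ennreal ((PS a f (NN a (Suc j)) x - PS a f (NN a j) x)\<^sup>2) \<partial>M)
      = (\<integral>\<^sup>+x. ennreal ((\<Sum>n\<in>{NN a j..<NN a (Suc j)}. a n * f n x)\<^sup>2) \<partial>M)"
    by (simp add: PS_diff NN_mono[OF assms])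
  also have "\<dots> \<le> ennreal (\<Sum>n\<in>{NN a j..<NN a (Suc j)}. (a n)\<^sup>2)"
    by (rule sum_sq_nn) simp
  also have "\<dots> \<le> ennreal ((1/16)^j)"
    by (intro ennreal_leI NN_prop[OF assms])
  finally show ?thesis .
qed

lemma RF_AE_lim:
  assumes sa: "summable (\<lambda>n. (a n)\<^sup>2)"
  shows "AE x in M. (\<lambda>j. PS a f (NN a j) x) \<longlonglongrightarrow> RF a f x"
proof -
  define D where "D j x = PS a f (NN a (Suc j)) x - PS a f (NN a j) x" for j x
  have [measurable]: "D j \<in> borel_measurable M" for j unfolding D_def by measurable
  have "(\<integral>\<^sup>+x. (\<Sum>j. ennreal (4^j * (D j x)\<^sup>2)) \<partial>M) = (\<Sum>j. \<integral>\<^sup>+x. ennreal (4^j * (D j x)\<^sup>2) \<partial>M)"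
    by (rule nn_integral_suminf) measurable
  also have "\<dots> \<le> (\<Sum>j. ennreal ((1/4)^j))"
  proof (intro suminf_le)
    fix j
    have "(\<integral>\<^sup>+x. ennreal (4^j * (D j x)\<^sup>2) \<partial>M) = ennreal (4^j) * (\<integral>\<^sup>+x. ennreal ((D j x)\<^sup>2) \<partial>M)"
      by (subst nn_integral_cmult[symmetric]) (auto simp: ennreal_mult)
    also have "\<dots> \<le> ennreal (4^j) * ennreal ((1/16)^j)"
      using block_bound[OF sa, of j] unfolding D_def by (intro mult_left_mono) auto
    also have "\<dots> = ennreal ((1/4)^j)"
      by (simp add: ennreal_mult[symmetric] power_mult_distrib[symmetric])
    finally show "(\<integral>\<^sup>+x. ennreal (4^j * (D j x)\<^sup>2) \<partial>M) \<le> ennreal ((1/4)^j)" .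
  qed auto
  also have "\<dots> = ennreal (\<Sum>j. (1/4)^j)"
    by (rule suminf_ennreal2) auto
  also have "\<dots> < \<infinity>" by simp
  finally have "(\<integral>\<^sup>+x. (\<Sum>j. ennreal (4^j * (D j x)\<^sup>2)) \<partial>M) \<noteq> \<infinity>" by simp
  then have "AE x in M. (\<Sum>j. ennreal (4^j * (D j x)\<^sup>2)) \<noteq> \<infinity>"
    by (intro nn_integral_PInf_AE) measurable
  then show ?thesis
  proof (rule AE_mp, intro AE_I2 impI)
    fix x assume fin: "(\<Sum>j. ennreal (4^j * (D j x)\<^sup>2)) \<noteq> \<infinity>"
    have s1: "summable (\<lambda>j. 4^j * (D j x)\<^sup>2)"
      by (rule summable_suminf_not_top) (use fin in auto)
    define C where "C = (\<Sum>j. 4^j * (D j x)\<^sup>2)"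
    have C: "4^j * (D j x)\<^sup>2 \<le> C" for j
      unfolding C_def using sum_le_suminf[OF s1, of "{j}"] by auto
    have Db: "\<bar>D j x\<bar> \<le> sqrt C * (1/2)^j" for j
    proof -
      have "(4::real)^j = 2^j * 2^j" by (simp add: power_mult_distrib[symmetric])
      then have "(2^j * \<bar>D j x\<bar>)\<^sup>2 = 4^j * (D j x)\<^sup>2" by (simp add: power2_eq_square)
      then have "(2^j * \<bar>D j x\<bar>)\<^sup>2 \<le> C" using C[of j] by simp
      then have "2^j * \<bar>D j x\<bar> \<le> sqrt C" using real_le_rsqrt by blast
      then show ?thesis by (simp add: field_simps power_divide)
    qed
    have "summable (\<lambda>j. D j x)"
    proof (rule summable_comparison_test'[where N=0])
      show "summable (\<lambda>j. sqrt C * (1/2::real)^j)"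
        by (intro summable_mult summable_geometric) simp
      show "norm (D j x) \<le> sqrt C * (1/2)^j" for j using Db[of j] by simp
    qed
    then have "(\<lambda>j. \<Sum>i<j. D i x) \<longlonglongrightarrow> (\<Sum>i. D i x)" by (rule summable_LIMSEQ)
    moreover have "(\<Sum>i<j. D i x) = PS a f (NN a j) x - PS a f (NN a 0) x" for j
      unfolding D_def by (induction j) auto
    ultimately have "(\<lambda>j. PS a f (NN a j) x - PS a f (NN a 0) x) \<longlonglongrightarrow> (\<Sum>i. D i x)" by simp
    then have "(\<lambda>j. (PS a f (NN a j) x - PS a f (NN a 0) x) + PS a f (NN a 0) x) \<longlonglongrightarrow> (\<Sum>i. D i x) + PS a f (NN a 0) x"
      by (intro tendsto_add) auto
    then have L: "(\<lambda>j. PS a f (NN a j) x) \<longlonglongrightarrow> (\<Sum>i. D i x) + PS a f (NN a 0) x" by simp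
    then have "RF a f x = (\<Sum>i. D i x) + PS a f (NN a 0) x"
      unfolding RF_def by (rule limI)
    then show "(\<lambda>j. PS a f (NN a j) x) \<longlonglongrightarrow> RF a f x" using L by simp
  qed
qed

lemma RF_L2:
  assumes sa: "summable (\<lambda>n. (a n)\<^sup>2)" and e: "e > 0"
  shows "\<exists>N0. \<forall>N\<ge>N0. (\<integral>\<^sup>+x. ennreal ((RF a f x - PS a f N x)\<^sup>2) \<partial>M) \<le> ennreal e"
proof -
  obtain N0 where N0: "\<And>N m. N \<ge> N0 \<Longrightarrow> (\<Sum>n\<in>{N..<m}. (a n)\<^sup>2) \<le> e"
    using tail_small[OF sa e] by blast
  obtain J where J: "(1/16::real)^J < e"
    using real_arch_pow_inv[OF e, of "1/16"] by auto
  show ?thesis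
  proof (intro exI allI impI)
    fix N assume N: "N \<ge> N0"
    have bnd: "(\<integral>\<^sup>+x. ennreal ((PS a f (NN a j) x - PS a f N x)\<^sup>2) \<partial>M) \<le> ennreal e" if "j \<ge> J" for j
    proof (cases "N \<le> NN a j")
      case True
      have "(\<integral>\<^sup>+x. ennreal ((PS a f (NN a j) x - PS a f N x)\<^sup>2) \<partial>M)
          = (\<integral>\<^sup>+x. ennreal ((\<Sum>n\<in>{N..<NN a j}. a n * f n x)\<^sup>2) \<partial>M)"
        by (simp add: PS_diff True)
      also have "\<dots> \<le> ennreal (\<Sum>n\<in>{N..<NN a j}. (a n)\<^sup>2)" by (rule sum_sq_nn) simp
      also have "\<dots> \<le> ennreal e" using N0[OF N] by (intro ennreal_leI)
      finally show ?thesis .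
    next
      case False
      have "(\<integral>\<^sup>+x. ennreal ((PS a f (NN a j) x - PS a f N x)\<^sup>2) \<partial>M)
          = (\<integral>\<^sup>+x. ennreal ((PS a f N x - PS a f (NN a j) x)\<^sup>2) \<partial>M)"
        by (simp add: power2_commute)
      also have "\<dots> = (\<integral>\<^sup>+x. ennreal ((\<Sum>n\<in>{NN a j..<N}. a n * f n x)\<^sup>2) \<partial>M)"
        using False by (simp add: PS_diff)
      also have "\<dots> \<le> ennreal (\<Sum>n\<in>{NN a j..<N}. (a n)\<^sup>2)" by (rule sum_sq_nn) simp
      also have "\<dots> \<le> ennreal ((1/16)^j)" by (intro ennreal_leI NN_prop[OF sa])
      also have "\<dots> \<le> ennreal e"
      proof (intro ennreal_leI)
        have "(1/16::real)^j \<le> (1/16)^J" by (rule power_decreasing) (use that in auto)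
        then show "(1/16::real)^j \<le> e" using J by linarith
      qed
      finally show ?thesis .
    qed
    have "(\<integral>\<^sup>+x. ennreal ((RF a f x - PS a f N x)\<^sup>2) \<partial>M)
        = (\<integral>\<^sup>+x. liminf (\<lambda>j. ennreal ((PS a f (NN a j) x - PS a f N x)\<^sup>2)) \<partial>M)"
    proof (rule nn_integral_cong_AE)
      show "AE x in M. ennreal ((RF a f x - PS a f N x)\<^sup>2) = liminf (\<lambda>j. ennreal ((PS a f (NN a j) x - PS a f N x)\<^sup>2))"
        using RF_AE_lim[OF sa]
      proof (rule AE_mp, intro AE_I2 impI)
        fix x assume "(\<lambda>j. PS a f (NN a j) x) \<longlonglongrightarrow> RF a f x"
        then have "(\<lambda>j. ennreal ((PS a f (NN a j) x - PS a f N x)\<^sup>2)) \<longlonglongrightarrow> ennreal ((RF a f x - PS a f N x)\<^sup>2)"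
          by (intro tendsto_ennrealI tendsto_intros)
        then show "ennreal ((RF a f x - PS a f N x)\<^sup>2) = liminf (\<lambda>j. ennreal ((PS a f (NN a j) x - PS a f N x)\<^sup>2))"
          using lim_imp_Liminf[OF trivial_limit_sequentially] by metis
      qed
    qed
    also have "\<dots> \<le> liminf (\<lambda>j. \<integral>\<^sup>+x. ennreal ((PS a f (NN a j) x - PS a f N x)\<^sup>2) \<partial>M)"
      by (rule nn_integral_liminf) measurable
    also have "\<dots> \<le> ennreal e"
      by (intro Liminf_le) (auto intro!: eventually_sequentiallyI[of J] bnd)
    finally show "(\<integral>\<^sup>+x. ennreal ((RF a f x - PS a f N x)\<^sup>2) \<partial>M) \<le> ennreal e" .
  qed
qed

end



lemma CS_sq:
  assumes g: "sq_integrable M g" and h: "sq_integrable M h"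
  shows "(\<integral>x. g x * h x \<partial>M)\<^sup>2 \<le> (\<integral>x. (g x)\<^sup>2 \<partial>M) * (\<integral>x. (h x)\<^sup>2 \<partial>M)"
proof -
  define A where "A = (\<integral>x. (g x)\<^sup>2 \<partial>M)"
  define B where "B = (\<integral>x. g x * h x \<partial>M)"
  define C where "C = (\<integral>x. (h x)\<^sup>2 \<partial>M)"
  have Q: "0 \<le> A + 2 * t * B + t\<^sup>2 * C" for t
  proof -
    have "0 \<le> (\<integral>x. (g x + t * h x)\<^sup>2 \<partial>M)" by simp
    also have "(\<integral>x. (g x + t * h x)\<^sup>2 \<partial>M) = (\<integral>x. (g x)\<^sup>2 + (2 * t) * (g x * h x) + t\<^sup>2 * (h x)\<^sup>2 \<partial>M)"
      by (simp add: power2_sum power_mult_distrib algebra_simps)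
    also have "\<dots> = A + 2 * t * B + t\<^sup>2 * C"
      using sqi_int[OF g] sqi_int[OF h] sqi_mult[OF g h] unfolding A_def B_def C_def by simp
    finally show ?thesis .
  qed
  have C0: "0 \<le> C" unfolding C_def by simp
  show ?thesis
  proof (cases "C = 0")
    case True
    have "B = 0"
    proof (rule ccontr)
      assume "B \<noteq> 0"
      then have "0 \<le> A + 2 * (-(A+1)/(2*B)) * B" using Q[of "-(A+1)/(2*B)"] True by simp
      then show False using \<open>B \<noteq> 0\<close> by (simp add: field_simps)
    qed
    then show ?thesis using True unfolding A_def B_def C_def by simp
  next
    case False
    then have Cp: "C > 0" using C0 by simp
    have "0 \<le> A + 2 * (-B/C) * B + (-B/C)\<^sup>2 * C" by (rule Q)
    also have "\<dots> = A - B\<^sup>2 / C" using Cp by (simp add: field_simps power2_eq_square)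
    finally have "B\<^sup>2 / C \<le> A" by simp
    then have "B\<^sup>2 \<le> A * C" using Cp by (simp add: field_simps)
    then show ?thesis unfolding A_def B_def C_def .
  qed
qed

lemma CS_abs:
  assumes g: "sq_integrable M g" and h: "sq_integrable M h"
  shows "\<bar>\<integral>x. g x * h x \<partial>M\<bar> \<le> sqrt (\<integral>x. (g x)\<^sup>2 \<partial>M) * sqrt (\<integral>x. (h x)\<^sup>2 \<partial>M)"
proof -
  have "sqrt ((\<integral>x. g x * h x \<partial>M)\<^sup>2) \<le> sqrt ((\<integral>x. (g x)\<^sup>2 \<partial>M) * (\<integral>x. (h x)\<^sup>2 \<partial>M))"
    by (rule real_sqrt_le_mono[OF CS_sq[OF g h]])
  then show ?thesis by (simp add: real_sqrt_mult)
qed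

lemma nn_to_int:
  assumes "sq_integrable M h"
  shows "(\<integral>\<^sup>+x. ennreal ((h x)\<^sup>2) \<partial>M) = ennreal (\<integral>x. (h x)\<^sup>2 \<partial>M)"
  using assms by (intro nn_integral_eq_integral) (auto simp: sq_integrable_def)

lemma inner_limit:
  assumes g: "sq_integrable M g" and F: "sq_integrable M F" and S: "\<And>N. sq_integrable M (S N)"
    and conv: "\<And>e. e > 0 \<Longrightarrow> \<exists>N0. \<forall>N\<ge>N0. (\<integral>\<^sup>+x. ennreal ((F x - S N x)\<^sup>2) \<partial>M) \<le> ennreal e"
  shows "(\<lambda>N. \<integral>x. g x * S N x \<partial>M) \<longlonglongrightarrow> (\<integral>x. g x * F x \<partial>M)"
proof (rule LIMSEQ_I)
  fix r :: real assume r: "r > 0"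
  define G where "G = (\<integral>x. (g x)\<^sup>2 \<partial>M)"
  have G0: "G \<ge> 0" unfolding G_def by simp
  have sG: "sqrt G + 1 > 0" using G0 by (simp add: add_nonneg_pos)
  define e where "e = (r / (sqrt G + 1))\<^sup>2"
  have e: "e > 0" unfolding e_def using r sG by simp
  obtain N0 where N0: "\<forall>N\<ge>N0. (\<integral>\<^sup>+x. ennreal ((F x - S N x)\<^sup>2) \<partial>M) \<le> ennreal e"
    using conv[OF e] by blast
  show "\<exists>no. \<forall>n\<ge>no. norm ((\<integral>x. g x * S n x \<partial>M) - (\<integral>x. g x * F x \<partial>M)) < r"
  proof (intro exI allI impI)
    fix N assume "N \<ge> N0"
    have sd: "sq_integrable M (\<lambda>x. F x - S N x)" by (rule sqi_minus[OF F S])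
    have H: "(\<integral>x. (F x - S N x)\<^sup>2 \<partial>M) \<le> e"
      using N0 \<open>N \<ge> N0\<close> nn_to_int[OF sd] e by (auto simp: ennreal_le_iff)
    have "(\<integral>x. g x * S N x \<partial>M) - (\<integral>x. g x * F x \<partial>M) = - (\<integral>x. g x * (F x - S N x) \<partial>M)"
      using sqi_mult[OF g F] sqi_mult[OF g S[of N]] by (simp add: algebra_simps)
    then have "norm ((\<integral>x. g x * S N x \<partial>M) - (\<integral>x. g x * F x \<partial>M)) = \<bar>\<integral>x. g x * (F x - S N x) \<partial>M\<bar>"
      by simp
    also have "\<dots> \<le> sqrt G * sqrt (\<integral>x. (F x - S N x)\<^sup>2 \<partial>M)"
      unfolding G_def by (rule CS_abs[OF g sd])
    also have "\<dots> \<le> sqrt G * sqrt e"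
      using G0 by (intro mult_left_mono real_sqrt_le_mono H) simp
    also have "sqrt e = r / (sqrt G + 1)" unfolding e_def using r sG by simp
    also have "sqrt G * (r / (sqrt G + 1)) < r"
      using r G0 sG by (simp add: field_simps)
    finally show "norm ((\<integral>x. g x * S N x \<partial>M) - (\<integral>x. g x * F x \<partial>M)) < r" .
  qed
qed

context orth_sys
begin

lemma PS_sqi: "sq_integrable M (PS a f N)"
  unfolding PS_def by (intro sqi_sum sqi_scale sqi_f)

lemma RF_sqi:
  assumes sa: "summable (\<lambda>n. (a n)\<^sup>2)"
  shows "sq_integrable M (RF a f)"
proof -
  obtain N where N: "(\<integral>\<^sup>+x. ennreal ((RF a f x - PS a f N x)\<^sup>2) \<partial>M) \<le> ennreal 1"
    using RF_L2[OF sa, of 1] by auto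
  have "(\<integral>\<^sup>+x. ennreal ((RF a f x)\<^sup>2) \<partial>M) \<le> (\<integral>\<^sup>+x. 2 * ennreal ((RF a f x - PS a f N x)\<^sup>2) + 2 * ennreal ((PS a f N x)\<^sup>2) \<partial>M)"
  proof (intro nn_integral_mono)
    fix x
    have "(RF a f x)\<^sup>2 \<le> 2 * (RF a f x - PS a f N x)\<^sup>2 + 2 * (PS a f N x)\<^sup>2"
    proof -
      have "0 \<le> (RF a f x - 2 * PS a f N x)\<^sup>2" by simp
      then show ?thesis by (simp add: power2_eq_square algebra_simps)
    qed
    then have "ennreal ((RF a f x)\<^sup>2) \<le> ennreal (2 * (RF a f x - PS a f N x)\<^sup>2 + 2 * (PS a f N x)\<^sup>2)"
      by (rule ennreal_leI)
    also have "\<dots> = 2 * ennreal ((RF a f x - PS a f N x)\<^sup>2) + 2 * ennreal ((PS a f N x)\<^sup>2)"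
      by (simp add: ennreal_plus ennreal_mult)
    finally show "ennreal ((RF a f x)\<^sup>2) \<le> 2 * ennreal ((RF a f x - PS a f N x)\<^sup>2) + 2 * ennreal ((PS a f N x)\<^sup>2)" .
  qed
  also have "\<dots> = 2 * (\<integral>\<^sup>+x. ennreal ((RF a f x - PS a f N x)\<^sup>2) \<partial>M) + 2 * (\<integral>\<^sup>+x. ennreal ((PS a f N x)\<^sup>2) \<partial>M)"
    by (simp add: nn_integral_add nn_integral_cmult)
  also have "\<dots> < \<infinity>"
  proof -
    have I1: "(\<integral>\<^sup>+x. ennreal ((RF a f x - PS a f N x)\<^sup>2) \<partial>M) < \<top>"
      using N ennreal_less_top[of 1] by (rule le_less_trans)
    have I2: "(\<integral>\<^sup>+x. ennreal ((PS a f N x)\<^sup>2) \<partial>M) < \<top>"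
      using nn_to_int[OF PS_sqi[of a N]] by simp
    show ?thesis using I1 I2 by (simp add: ennreal_mult_less_top)
  qed
  finally have fin: "(\<integral>\<^sup>+x. ennreal ((RF a f x)\<^sup>2) \<partial>M) < \<infinity>" .
  show ?thesis unfolding sq_integrable_def
    by (auto intro!: integrableI_nonneg fin)
qed

lemma RF_conv:
  assumes sa: "summable (\<lambda>n. (a n)\<^sup>2)"
  shows "\<And>e. e > 0 \<Longrightarrow> \<exists>N0. \<forall>N\<ge>N0. (\<integral>\<^sup>+x. ennreal ((RF a f x - PS a f N x)\<^sup>2) \<partial>M) \<le> ennreal e"
  using RF_L2[OF sa] by blast

end



definition gs_res :: "'b measure \<Rightarrow> ('b \<Rightarrow> real) \<Rightarrow> ('b \<Rightarrow> real) list \<Rightarrow> 'b \<Rightarrow> real" where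
  "gs_res M v es z = v z - (\<Sum>m<length es. (\<integral>y. v y * (es!m) y \<partial>M) * (es!m) z)"

definition gs_step :: "'b measure \<Rightarrow> ('b \<Rightarrow> real) \<Rightarrow> ('b \<Rightarrow> real) list \<Rightarrow> 'b \<Rightarrow> real" where
  "gs_step M v es = (if (\<integral>z. (gs_res M v es z)\<^sup>2 \<partial>M) = 0 then (\<lambda>z. 0)
     else (\<lambda>z. gs_res M v es z / sqrt (\<integral>z. (gs_res M v es z)\<^sup>2 \<partial>M)))"

fun gsl :: "'b measure \<Rightarrow> (nat \<Rightarrow> 'b \<Rightarrow> real) \<Rightarrow> nat \<Rightarrow> ('b \<Rightarrow> real) list" where
  "gsl M d 0 = []"
| "gsl M d (Suc n) = gsl M d n @ [gs_step M (d n) (gsl M d n)]"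

definition gse :: "'b measure \<Rightarrow> (nat \<Rightarrow> 'b \<Rightarrow> real) \<Rightarrow> nat \<Rightarrow> 'b \<Rightarrow> real" where
  "gse M d n = gsl M d (Suc n) ! n"

lemma length_gsl[simp]: "length (gsl M d n) = n"
  by (induction n) auto

lemma gsl_nth: "m < n \<Longrightarrow> gsl M d n ! m = gse M d m"
proof (induction n)
  case (Suc n)
  then show ?case
    by (cases "m = n") (auto simp: gse_def nth_append)
qed simp

definition gsR :: "'b measure \<Rightarrow> (nat \<Rightarrow> 'b \<Rightarrow> real) \<Rightarrow> nat \<Rightarrow> 'b \<Rightarrow> real" where
  "gsR M d n z = d n z - (\<Sum>m<n. (\<integral>y. d n y * gse M d m y \<partial>M) * gse M d m z)"

lemma gse_eq: "gse M d n = (if (\<integral>z. (gsR M d n z)\<^sup>2 \<partial>M) = 0 then (\<lambda>z. 0)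
     else (\<lambda>z. gsR M d n z / sqrt (\<integral>z. (gsR M d n z)\<^sup>2 \<partial>M)))"
proof -
  have "gs_res M (d n) (gsl M d n) = gsR M d n"
    by (auto simp: gs_res_def gsR_def gsl_nth intro!: sum.cong ext)
  then show ?thesis by (simp add: gse_def gs_step_def nth_append)
qed

locale gs_sys =
  fixes M :: "'b measure" and d :: "nat \<Rightarrow> 'b \<Rightarrow> real"
  assumes sqi_d: "\<And>n. sq_integrable M (d n)"
begin

abbreviation "e \<equiv> gse M d"
abbreviation "R \<equiv> gsR M d"

lemma props:
  "sq_integrable M (e n) \<and> (e n = (\<lambda>z. 0) \<or> (\<integral>z. (e n z)\<^sup>2 \<partial>M) = 1) \<and>
   (\<forall>k<n. (\<integral>z. e n z * e k z \<partial>M) = 0)"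
proof (induction n rule: less_induct)
  case (less n)
  have sqe: "\<And>m. m < n \<Longrightarrow> sq_integrable M (e m)" using less by blast
  have sqR: "sq_integrable M (R n)"
    unfolding gsR_def[abs_def]
    by (intro sqi_minus sqi_d sqi_sum sqi_scale sqe) auto
  have oe: "(\<integral>z. e m z * e k z \<partial>M) = 0" if "m < n" "k < n" "m \<noteq> k" for m k
  proof (cases "k < m")
    case True then show ?thesis using less[OF \<open>m < n\<close>] by blast
  next
    case False then have "m < k" using that by simp
    then have "(\<integral>z. e k z * e m z \<partial>M) = 0" using less[OF \<open>k < n\<close>] by blast
    then show ?thesis by (simp add: mult.commute)
  qed
  have orthR: "(\<integral>z. R n z * e k z \<partial>M) = 0" if "k < n" for k
  proof -
    define \<alpha> where "\<alpha> m = (\<integral>y. d n y * e m y \<partial>M)" for m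
    have "(\<integral>z. R n z * e k z \<partial>M) = (\<integral>z. d n z * e k z - (\<Sum>m<n. \<alpha> m * (e m z * e k z)) \<partial>M)"
      unfolding gsR_def \<alpha>_def by (rule Bochner_Integration.integral_cong[OF refl]) (simp add: right_diff_distrib sum_distrib_left mult_ac)
    also have "\<dots> = (\<integral>z. d n z * e k z \<partial>M) - (\<Sum>m<n. \<alpha> m * (\<integral>z. e m z * e k z \<partial>M))"
    proof -
      have i1: "integrable M (\<lambda>z. d n z * e k z)" by (rule sqi_mult[OF sqi_d sqe[OF that]])
      have i2: "integrable M (\<lambda>z. (\<Sum>m<n. \<alpha> m * (e m z * e k z)))"
        by (intro Bochner_Integration.integrable_sum) (simp add: sqi_mult[OF sqe sqe[OF that]])
      show ?thesis
        by (simp add: Bochner_Integration.integral_diff[OF i1 i2] Bochner_Integration.integral_sum sqi_mult[OF sqe sqe[OF that]])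
    qed
    also have "(\<Sum>m<n. \<alpha> m * (\<integral>z. e m z * e k z \<partial>M)) = (\<Sum>m<n. if m = k then \<alpha> k * (\<integral>z. e k z * e k z \<partial>M) else 0)"
      by (rule sum.cong) (auto simp: oe that)
    also have "\<dots> = \<alpha> k * (\<integral>z. e k z * e k z \<partial>M)" using that by (simp add: sum.delta)
    also have "(\<integral>z. d n z * e k z \<partial>M) - \<alpha> k * (\<integral>z. e k z * e k z \<partial>M) = 0"
    proof -
      from less[OF that] have "e k = (\<lambda>z. 0) \<or> (\<integral>z. (e k z)\<^sup>2 \<partial>M) = 1" by blast
      then show ?thesis
      proof
        assume "e k = (\<lambda>z. 0)" then show ?thesis by simp
      next
        assume "(\<integral>z. (e k z)\<^sup>2 \<partial>M) = 1"
        then show ?thesis by (simp add: \<alpha>_def power2_eq_square)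
      qed
    qed
    finally show ?thesis .
  qed
  show ?case
  proof (cases "(\<integral>z. (R n z)\<^sup>2 \<partial>M) = 0")
    case True
    then have "e n = (\<lambda>z. 0)" by (subst gse_eq) simp
    then show ?thesis by (simp add: sqi_zero)
  next
    case False
    define c where "c = (\<integral>z. (R n z)\<^sup>2 \<partial>M)"
    have c: "c > 0" using False unfolding c_def by (simp add: less_le)
    have en: "e n = (\<lambda>z. R n z / sqrt c)" using False unfolding c_def by (subst gse_eq) simp
    have "sq_integrable M (e n)" unfolding en using sqi_scale[OF sqR, of "1 / sqrt c"] by simp
    moreover have "(\<integral>z. (e n z)\<^sup>2 \<partial>M) = 1"
      using c unfolding en by (simp add: power_divide c_def[symmetric])
    moreover have "\<forall>k<n. (\<integral>z. e n z * e k z \<partial>M) = 0"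
      using orthR unfolding en by simp
    ultimately show ?thesis by blast
  qed
qed

lemma sqi_e: "sq_integrable M (e n)" using props by blast

lemma e_cases: "e n = (\<lambda>z. 0) \<or> (\<integral>z. (e n z)\<^sup>2 \<partial>M) = 1" using props by blast

lemma e_orth: "n \<noteq> m \<Longrightarrow> (\<integral>z. e n z * e m z \<partial>M) = 0"
proof (cases "m < n")
  case True then show ?thesis using props by blast
next
  case False
  assume "n \<noteq> m"
  with False have "n < m" by simp
  then have "(\<integral>z. e m z * e n z \<partial>M) = 0" using props by blast
  then show ?thesis by (simp add: mult.commute)
qed

sublocale os: orth_sys M e
proof
  show "sq_integrable M (e n)" for n by (rule sqi_e)
  show "n \<noteq> m \<Longrightarrow> (\<integral>z. e n z * e m z \<partial>M) = 0" for n m by (rule e_orth)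
  show "(\<integral>z. (e n z)\<^sup>2 \<partial>M) \<le> 1" for n using e_cases[of n] by auto
qed

lemma coef_norm: "(\<integral>y. g y * e n y \<partial>M) * (\<integral>z. (e n z)\<^sup>2 \<partial>M) = (\<integral>y. g y * e n y \<partial>M)"
  using e_cases[of n] by auto

lemma perp:
  assumes h: "sq_integrable M h" and ho: "\<And>m. (\<integral>z. h z * e m z \<partial>M) = 0"
  shows "(\<integral>z. h z * d n z \<partial>M) = 0"
proof -
  have sqR: "sq_integrable M (R n)"
    unfolding gsR_def[abs_def] by (intro sqi_minus sqi_d sqi_sum sqi_scale sqi_e)
  define \<alpha> where "\<alpha> m = (\<integral>y. d n y * e m y \<partial>M)" for m
  have dn: "d n z = R n z + (\<Sum>m<n. \<alpha> m * e m z)" for z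
    unfolding gsR_def \<alpha>_def by simp
  have "(\<integral>z. h z * d n z \<partial>M) = (\<integral>z. h z * R n z + (\<Sum>m<n. \<alpha> m * (h z * e m z)) \<partial>M)"
    unfolding dn by (simp add: algebra_simps sum_distrib_left)
  also have "\<dots> = (\<integral>z. h z * R n z \<partial>M) + (\<Sum>m<n. \<alpha> m * (\<integral>z. h z * e m z \<partial>M))"
  proof -
    have i1: "integrable M (\<lambda>z. h z * R n z)" by (rule sqi_mult[OF h sqR])
    have i2: "integrable M (\<lambda>z. (\<Sum>m<n. \<alpha> m * (h z * e m z)))"
      by (intro Bochner_Integration.integrable_sum) (simp add: sqi_mult[OF h sqi_e])
    show ?thesis
      by (simp add: Bochner_Integration.integral_add[OF i1 i2] Bochner_Integration.integral_sum sqi_mult[OF h sqi_e])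
  qed
  also have "\<dots> = (\<integral>z. h z * R n z \<partial>M)" by (simp add: ho)
  also have "\<dots> = 0"
  proof (cases "(\<integral>z. (R n z)\<^sup>2 \<partial>M) = 0")
    case True
    then have "AE z in M. (R n z)\<^sup>2 = 0"
      using sqR by (subst integral_nonneg_eq_0_iff_AE[symmetric]) (auto simp: sq_integrable_def)
    then have "AE z in M. h z * R n z = 0" by auto
    then have "(\<integral>z. h z * R n z \<partial>M) = (\<integral>z. 0 \<partial>M)"
      using h sqR by (intro integral_cong_AE) (auto simp: sq_integrable_def)
    then show ?thesis by simp
  next
    case False
    define c where "c = (\<integral>z. (R n z)\<^sup>2 \<partial>M)"
    have c: "c > 0" using False unfolding c_def by (simp add: less_le)
    have en: "e n = (\<lambda>z. R n z / sqrt c)" using False unfolding c_def by (subst gse_eq) simp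
    have "R n z = sqrt c * e n z" for z using c unfolding en by simp
    then have "(\<integral>z. h z * R n z \<partial>M) = sqrt c * (\<integral>z. h z * e n z \<partial>M)"
      by (simp add: algebra_simps)
    then show ?thesis by (simp add: ho)
  qed
  finally show ?thesis .
qed

end



locale gs_complete = gs_sys +
  assumes compl: "\<And>h. sq_integrable M h \<Longrightarrow> (\<And>n. (\<integral>z. h z * d n z \<partial>M) = 0) \<Longrightarrow> AE z in M. h z = 0"
begin

definition coef :: "('a \<Rightarrow> real) \<Rightarrow> nat \<Rightarrow> real" where
  "coef g n = (\<integral>z. g z * e n z \<partial>M)"

lemma coef_sq: "(coef g n)\<^sup>2 * (\<integral>z. (e n z)\<^sup>2 \<partial>M) = (coef g n)\<^sup>2"
  using e_cases[of n] by (auto simp: coef_def)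

lemma bessel_eq:
  assumes g: "sq_integrable M g"
  shows "(\<integral>z. (g z - PS (coef g) e N z)\<^sup>2 \<partial>M) = (\<integral>z. (g z)\<^sup>2 \<partial>M) - (\<Sum>n<N. (coef g n)\<^sup>2)"
proof -
  define S where "S = PS (coef g) e N"
  have sS: "sq_integrable M S" unfolding S_def by (rule os.PS_sqi)
  have i1: "integrable M (\<lambda>z. (g z)\<^sup>2)" using g by (simp add: sq_integrable_def)
  have i2: "integrable M (\<lambda>z. g z * S z)" by (rule sqi_mult[OF g sS])
  have i3: "integrable M (\<lambda>z. (S z)\<^sup>2)" using sS by (simp add: sq_integrable_def)
  have "(\<integral>z. (g z - S z)\<^sup>2 \<partial>M) = (\<integral>z. (g z)\<^sup>2 - 2 * (g z * S z) + (S z)\<^sup>2 \<partial>M)"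
    by (simp add: power2_diff algebra_simps)
  also have "\<dots> = (\<integral>z. (g z)\<^sup>2 \<partial>M) - 2 * (\<integral>z. g z * S z \<partial>M) + (\<integral>z. (S z)\<^sup>2 \<partial>M)"
    using i1 i2 i3 by simp
  also have "(\<integral>z. g z * S z \<partial>M) = (\<Sum>n<N. (coef g n)\<^sup>2)"
  proof -
    have "(\<integral>z. g z * S z \<partial>M) = (\<integral>z. (\<Sum>n<N. coef g n * (g z * e n z)) \<partial>M)"
      unfolding S_def PS_def by (simp add: sum_distrib_left mult_ac)
    also have "\<dots> = (\<Sum>n<N. coef g n * (\<integral>z. g z * e n z \<partial>M))"
      by (simp add: Bochner_Integration.integral_sum sqi_mult[OF g sqi_e])
    finally show ?thesis by (simp add: coef_def power2_eq_square)
  qed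
  also have "(\<integral>z. (S z)\<^sup>2 \<partial>M) = (\<Sum>n<N. (coef g n)\<^sup>2)"
    unfolding S_def PS_def by (simp add: os.sum_sq coef_sq)
  finally show ?thesis unfolding S_def by simp
qed

lemma coef_summable:
  assumes g: "sq_integrable M g"
  shows "summable (\<lambda>n. (coef g n)\<^sup>2)"
proof (rule summableI_nonneg_bounded)
  show "(\<Sum>n<N. (coef g n)\<^sup>2) \<le> (\<integral>z. (g z)\<^sup>2 \<partial>M)" for N
  proof -
    have "0 \<le> (\<integral>z. (g z - PS (coef g) e N z)\<^sup>2 \<partial>M)" by simp
    then show ?thesis using bessel_eq[OF g, of N] by simp
  qed
qed simp

lemma RF_coef:
  assumes sa: "summable (\<lambda>n. (a n)\<^sup>2)" and ae: "\<And>n. e n = (\<lambda>z. 0) \<Longrightarrow> a n = 0"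
  shows "(\<integral>z. e m z * RF a e z \<partial>M) = a m"
proof -
  have L: "(\<lambda>N. \<integral>z. e m z * PS a e N z \<partial>M) \<longlonglongrightarrow> (\<integral>z. e m z * RF a e z \<partial>M)"
    by (rule inner_limit[OF sqi_e os.RF_sqi[OF sa] os.PS_sqi os.RF_conv[OF sa]])
  have am: "a m * (\<integral>z. e m z * e m z \<partial>M) = a m"
    using e_cases[of m] ae[of m] by (auto simp: power2_eq_square)
  have "(\<integral>z. e m z * PS a e N z \<partial>M) = a m" if "N > m" for N
  proof -
    have "(\<integral>z. e m z * PS a e N z \<partial>M) = (\<integral>z. (\<Sum>n<N. a n * (e m z * e n z)) \<partial>M)"
      unfolding PS_def by (simp add: sum_distrib_left mult_ac)
    also have "\<dots> = (\<Sum>n<N. a n * (\<integral>z. e m z * e n z \<partial>M))"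
      by (simp add: Bochner_Integration.integral_sum sqi_mult[OF sqi_e sqi_e])
    also have "\<dots> = (\<Sum>n<N. if n = m then a m * (\<integral>z. e m z * e m z \<partial>M) else 0)"
      by (rule sum.cong) (auto simp: e_orth)
    also have "\<dots> = a m" using that am by (simp add: sum.delta')
    finally show ?thesis .
  qed
  then have "(\<lambda>N. \<integral>z. e m z * PS a e N z \<partial>M) \<longlonglongrightarrow> a m"
    by (intro tendsto_eventually eventually_sequentiallyI[of "Suc m"]) auto
  then show ?thesis using L LIMSEQ_unique by blast
qed

lemma coef_zero: "e n = (\<lambda>z. 0) \<Longrightarrow> coef g n = 0"
  by (simp add: coef_def)

lemma AE_eq_RF:
  assumes g: "sq_integrable M g"
  shows "AE z in M. g z = RF (coef g) e z"
proof -
  have sa: "summable (\<lambda>n. (coef g n)\<^sup>2)" by (rule coef_summable[OF g])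
  have sF: "sq_integrable M (RF (coef g) e)" by (rule os.RF_sqi[OF sa])
  have sh: "sq_integrable M (\<lambda>z. g z - RF (coef g) e z)" by (rule sqi_minus[OF g sF])
  have "AE z in M. g z - RF (coef g) e z = 0"
  proof (rule compl[OF sh])
    fix n
    have "(\<integral>z. (g z - RF (coef g) e z) * e m z \<partial>M) = 0" for m
    proof -
      have "(\<integral>z. (g z - RF (coef g) e z) * e m z \<partial>M) = (\<integral>z. g z * e m z - e m z * RF (coef g) e z \<partial>M)"
        by (simp add: algebra_simps)
      also have "\<dots> = coef g m - (\<integral>z. e m z * RF (coef g) e z \<partial>M)"
        using sqi_mult[OF g sqi_e] sqi_mult[OF sqi_e sF] by (simp add: coef_def)
      also have "(\<integral>z. e m z * RF (coef g) e z \<partial>M) = coef g m"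
        by (rule RF_coef[OF sa coef_zero])
      finally show ?thesis by simp
    qed
    then show "(\<integral>z. (g z - RF (coef g) e z) * d n z \<partial>M) = 0"
      by (intro perp[OF sh]) auto
  qed
  then show ?thesis by auto
qed

lemma parseval:
  assumes g: "sq_integrable M g"
  shows "(\<lambda>n. (coef g n)\<^sup>2) sums (\<integral>z. (g z)\<^sup>2 \<partial>M)"
  unfolding sums_def
proof (rule LIMSEQ_I)
  fix r :: real assume r: "r > 0"
  have sa: "summable (\<lambda>n. (coef g n)\<^sup>2)" by (rule coef_summable[OF g])
  have sF: "sq_integrable M (RF (coef g) e)" by (rule os.RF_sqi[OF sa])
  obtain N0 where N0: "\<forall>N\<ge>N0. (\<integral>\<^sup>+z. ennreal ((RF (coef g) e z - PS (coef g) e N z)\<^sup>2) \<partial>M) \<le> ennreal (r/2)"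
    using os.RF_conv[OF sa, of "r/2"] r by auto
  show "\<exists>no. \<forall>n\<ge>no. norm ((\<Sum>i<n. (coef g i)\<^sup>2) - (\<integral>z. (g z)\<^sup>2 \<partial>M)) < r"
  proof (intro exI allI impI)
    fix N assume "N \<ge> N0"
    have sd: "sq_integrable M (\<lambda>z. RF (coef g) e z - PS (coef g) e N z)"
      by (rule sqi_minus[OF sF os.PS_sqi])
    have "(\<integral>z. (RF (coef g) e z - PS (coef g) e N z)\<^sup>2 \<partial>M) \<le> r/2"
      using N0 \<open>N \<ge> N0\<close> nn_to_int[OF sd] r by (auto simp: ennreal_le_iff)
    moreover have "(\<integral>z. (g z - PS (coef g) e N z)\<^sup>2 \<partial>M) = (\<integral>z. (RF (coef g) e z - PS (coef g) e N z)\<^sup>2 \<partial>M)"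
      using AE_eq_RF[OF g] g sF by (intro integral_cong_AE) (auto simp: sq_integrable_def)
    ultimately have "(\<integral>z. (g z)\<^sup>2 \<partial>M) - (\<Sum>n<N. (coef g n)\<^sup>2) \<le> r/2"
      using bessel_eq[OF g, of N] by simp
    moreover have "(\<Sum>n<N. (coef g n)\<^sup>2) \<le> (\<integral>z. (g z)\<^sup>2 \<partial>M)"
    proof -
      have "0 \<le> (\<integral>z. (g z - PS (coef g) e N z)\<^sup>2 \<partial>M)" by simp
      then show ?thesis using bessel_eq[OF g, of N] by simp
    qed
    ultimately show "norm ((\<Sum>i<N. (coef g i)\<^sup>2) - (\<integral>z. (g z)\<^sup>2 \<partial>M)) < r"
      using r by simp
  qed
qed

lemma coef_add: "sq_integrable M g \<Longrightarrow> sq_integrable M h \<Longrightarrow> coef (\<lambda>z. g z + h z) n = coef g n + coef h n"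
  unfolding coef_def using sqi_mult[OF _ sqi_e, of g n] sqi_mult[OF _ sqi_e, of h n]
  by (simp add: distrib_right)

lemma coef_diff: "sq_integrable M g \<Longrightarrow> sq_integrable M h \<Longrightarrow> coef (\<lambda>z. g z - h z) n = coef g n - coef h n"
  unfolding coef_def using sqi_mult[OF _ sqi_e, of g n] sqi_mult[OF _ sqi_e, of h n]
  by (simp add: left_diff_distrib)

lemma polar:
  assumes g: "sq_integrable M g" and h: "sq_integrable M h"
  shows "(\<lambda>n. coef g n * coef h n) sums (\<integral>z. g z * h z \<partial>M)"
proof -
  have p1: "(\<lambda>n. (coef g n + coef h n)\<^sup>2) sums (\<integral>z. (g z + h z)\<^sup>2 \<partial>M)"
    using parseval[OF sqi_add[OF g h]] by (simp add: coef_add[OF g h])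
  have p2: "(\<lambda>n. (coef g n - coef h n)\<^sup>2) sums (\<integral>z. (g z - h z)\<^sup>2 \<partial>M)"
    using parseval[OF sqi_minus[OF g h]] by (simp add: coef_diff[OF g h])
  have "(\<lambda>n. ((coef g n + coef h n)\<^sup>2 - (coef g n - coef h n)\<^sup>2) / 4) sums
      (((\<integral>z. (g z + h z)\<^sup>2 \<partial>M) - (\<integral>z. (g z - h z)\<^sup>2 \<partial>M)) / 4)"
    by (intro sums_divide sums_diff p1 p2)
  moreover have "((coef g n + coef h n)\<^sup>2 - (coef g n - coef h n)\<^sup>2) / 4 = coef g n * coef h n" for n
    by (simp add: power2_eq_square algebra_simps)
  moreover have "((\<integral>z. (g z + h z)\<^sup>2 \<partial>M) - (\<integral>z. (g z - h z)\<^sup>2 \<partial>M)) / 4 = (\<integral>z. g z * h z \<partial>M)"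
  proof -
    have "(\<integral>z. (g z + h z)\<^sup>2 \<partial>M) - (\<integral>z. (g z - h z)\<^sup>2 \<partial>M) = (\<integral>z. (g z + h z)\<^sup>2 - (g z - h z)\<^sup>2 \<partial>M)"
      using sqi_add[OF g h] sqi_minus[OF g h] by (simp add: sq_integrable_def)
    also have "\<dots> = (\<integral>z. 4 * (g z * h z) \<partial>M)"
      by (rule Bochner_Integration.integral_cong) (auto simp: power2_eq_square algebra_simps)
    finally show ?thesis by simp
  qed
  ultimately show ?thesis by simp
qed

end



context orth_sys
begin

lemma RF_inner_f:
  assumes sa: "summable (\<lambda>n. (a n)\<^sup>2)" and n1: "(\<integral>z. (f m z)\<^sup>2 \<partial>M) = 1"
  shows "(\<integral>z. f m z * RF a f z \<partial>M) = a m"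
proof -
  have L: "(\<lambda>N. \<integral>z. f m z * PS a f N z \<partial>M) \<longlonglongrightarrow> (\<integral>z. f m z * RF a f z \<partial>M)"
    by (rule inner_limit[OF sqi_f RF_sqi[OF sa] PS_sqi RF_conv[OF sa]])
  have "(\<integral>z. f m z * PS a f N z \<partial>M) = a m" if "N > m" for N
  proof -
    have "(\<integral>z. f m z * PS a f N z \<partial>M) = (\<integral>z. (\<Sum>n<N. a n * (f m z * f n z)) \<partial>M)"
      unfolding PS_def by (simp add: sum_distrib_left mult_ac)
    also have "\<dots> = (\<Sum>n<N. a n * (\<integral>z. f m z * f n z \<partial>M))"
      by (simp add: Bochner_Integration.integral_sum sqi_mult[OF sqi_f sqi_f])
    also have "\<dots> = (\<Sum>n<N. if n = m then a m * (\<integral>z. f m z * f m z \<partial>M) else 0)"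
      by (rule sum.cong) (auto simp: orth)
    also have "\<dots> = a m" using that n1 by (simp add: sum.delta' power2_eq_square)
    finally show ?thesis .
  qed
  then have "(\<lambda>N. \<integral>z. f m z * PS a f N z \<partial>M) \<longlonglongrightarrow> a m"
    by (intro tendsto_eventually eventually_sequentiallyI[of "Suc m"]) auto
  then show ?thesis using L LIMSEQ_unique by blast
qed

lemma RF_cov:
  assumes sa: "summable (\<lambda>n. (a n)\<^sup>2)" and sb: "summable (\<lambda>n. (b n)\<^sup>2)"
    and n1: "\<And>m. (\<integral>z. (f m z)\<^sup>2 \<partial>M) = 1"
  shows "(\<lambda>n. a n * b n) sums (\<integral>z. RF a f z * RF b f z \<partial>M)"
proof -
  have L: "(\<lambda>N. \<integral>z. RF a f z * PS b f N z \<partial>M) \<longlonglongrightarrow> (\<integral>z. RF a f z * RF b f z \<partial>M)"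
    by (rule inner_limit[OF RF_sqi[OF sa] RF_sqi[OF sb] PS_sqi RF_conv[OF sb]])
  have "(\<integral>z. RF a f z * PS b f N z \<partial>M) = (\<Sum>n<N. a n * b n)" for N
  proof -
    have "(\<integral>z. RF a f z * PS b f N z \<partial>M) = (\<integral>z. (\<Sum>n<N. b n * (f n z * RF a f z)) \<partial>M)"
      unfolding PS_def by (simp add: sum_distrib_left mult_ac)
    also have "\<dots> = (\<Sum>n<N. b n * (\<integral>z. f n z * RF a f z \<partial>M))"
      by (simp add: Bochner_Integration.integral_sum sqi_mult[OF sqi_f RF_sqi[OF sa]])
    also have "\<dots> = (\<Sum>n<N. a n * b n)" by (simp add: RF_inner_f[OF sa n1] mult.commute)
    finally show ?thesis .
  qed
  then show ?thesis using L unfolding sums_def by simp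
qed

end

abbreviation GP :: "(nat \<Rightarrow> real) measure" where
  "GP \<equiv> PiM (UNIV::nat set) (\<lambda>_. std_normal_distribution)"

interpretation GPP: product_prob_space "\<lambda>_::nat. std_normal_distribution" UNIV
  by (simp add: product_prob_space_def product_sigma_finite_def prob_space_normal_density
      prob_space_imp_sigma_finite product_prob_space_axioms_def)

lemma GP_prob: "prob_space GP"
  by (rule GPP.P.prob_space_axioms)

lemma sets_std: "sets std_normal_distribution = sets borel" by simp

lemma GP_distr_coord: "distr GP borel (\<lambda>\<omega>. \<omega> n) = std_normal_distribution"
proof -
  have "distr GP borel (\<lambda>\<omega>. \<omega> n) = distr GP std_normal_distribution (\<lambda>\<omega>. \<omega> n)"
    by (rule distr_cong) auto
  also have "\<dots> = std_normal_distribution" by (rule GPP.PiM_component) simp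
  finally show ?thesis .
qed

lemma GP_coord_meas[measurable]: "(\<lambda>\<omega>. \<omega> n) \<in> borel_measurable GP"
proof -
  have "(\<lambda>\<omega>. \<omega> n) \<in> measurable GP std_normal_distribution"
    by (rule measurable_component_singleton) simp
  then show ?thesis by (simp add: measurable_def)
qed

lemma GP_integral_coord:
  fixes g :: "real \<Rightarrow> 'c::{banach, second_countable_topology}"
  assumes [measurable]: "g \<in> borel_measurable borel"
  shows "(\<integral>\<omega>. g (\<omega> n) \<partial>GP) = (\<integral>x. g x \<partial>std_normal_distribution)"
    and "integrable GP (\<lambda>\<omega>. g (\<omega> n)) \<longleftrightarrow> integrable std_normal_distribution g"
proof -
  show "(\<integral>\<omega>. g (\<omega> n) \<partial>GP) = (\<integral>x. g x \<partial>std_normal_distribution)"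
    using integral_distr[of "\<lambda>\<omega>. \<omega> n" GP borel g] by (simp add: GP_distr_coord)
  show "integrable GP (\<lambda>\<omega>. g (\<omega> n)) \<longleftrightarrow> integrable std_normal_distribution g"
    using integrable_distr_eq[of "\<lambda>\<omega>. \<omega> n" GP borel g] by (simp add: GP_distr_coord)
qed

lemma GP_indep: "prob_space.indep_vars GP (\<lambda>_. borel) (\<lambda>i \<omega>. \<omega> i) UNIV"
proof -
  have "distr GP (\<Pi>\<^sub>M i\<in>UNIV. borel) (\<lambda>x. \<lambda>i\<in>UNIV. x i) = (\<Pi>\<^sub>M i\<in>UNIV. distr GP borel (\<lambda>\<omega>. \<omega> i))"
  proof -
    have "distr GP (\<Pi>\<^sub>M i\<in>UNIV. borel) (\<lambda>x. \<lambda>i\<in>UNIV. x i) = distr GP (\<Pi>\<^sub>M i\<in>UNIV. borel) (\<lambda>x. x)"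
      by (simp add: restrict_UNIV)
    also have "\<dots> = GP" by (rule distr_id2) (auto intro!: sets_PiM_cong)
    also have "\<dots> = (\<Pi>\<^sub>M i\<in>UNIV. distr GP borel (\<lambda>\<omega>. \<omega> i))"
      by (simp add: GP_distr_coord)
    finally show ?thesis .
  qed
  then show ?thesis
    by (subst GPP.P.indep_vars_iff_distr_eq_PiM) auto
qed

lemma GP_mom2: "(\<integral>\<omega>. (\<omega> n)\<^sup>2 \<partial>GP) = 1" "integrable GP (\<lambda>\<omega>. (\<omega> n)\<^sup>2)"
proof -
  have "(\<integral>\<omega>. (\<omega> n)\<^sup>2 \<partial>GP) = (\<integral>x. x^(2*1) \<partial>std_normal_distribution)"
    using GP_integral_coord(1)[of "\<lambda>x. x^2" n] by simp
  also have "\<dots> = 1" by (subst std_normal_distribution_even_moments(1)) simp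
  finally show "(\<integral>\<omega>. (\<omega> n)\<^sup>2 \<partial>GP) = 1" .
  show "integrable GP (\<lambda>\<omega>. (\<omega> n)\<^sup>2)"
    using GP_integral_coord(2)[of "\<lambda>x. x^2" n] integrable_std_normal_distribution_moment[of 2] by simp
qed

lemma GP_mom1: "(\<integral>\<omega>. \<omega> n \<partial>GP) = 0" "integrable GP (\<lambda>\<omega>. \<omega> n)"
proof -
  have "(\<integral>\<omega>. \<omega> n \<partial>GP) = (\<integral>x. x^1 \<partial>std_normal_distribution)"
    using GP_integral_coord(1)[of "\<lambda>x. x" n] by simp
  also have "\<dots> = 0" by (rule integral_std_normal_distribution_moment_odd) simp
  finally show "(\<integral>\<omega>. \<omega> n \<partial>GP) = 0" .
  show "integrable GP (\<lambda>\<omega>. \<omega> n)"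
    using GP_integral_coord(2)[of "\<lambda>x. x" n] integrable_std_normal_distribution_moment[of 1] by simp
qed

lemma GP_orth: "n \<noteq> m \<Longrightarrow> (\<integral>\<omega>. \<omega> n * \<omega> m \<partial>GP) = 0"
proof -
  assume nm: "n \<noteq> m"
  have ind: "prob_space.indep_vars GP (\<lambda>_. borel) (\<lambda>i \<omega>. \<omega> i) {n, m}"
    by (rule GPP.P.indep_vars_subset[OF GP_indep]) auto
  have "(\<integral>\<omega>. (\<Prod>i\<in>{n,m}. \<omega> i) \<partial>GP) = (\<Prod>i\<in>{n,m}. \<integral>\<omega>. \<omega> i \<partial>GP)"
    by (rule GPP.P.indep_vars_lebesgue_integral[OF _ ind]) (auto simp: GP_mom1)
  then show ?thesis using nm by (simp add: GP_mom1)
qed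

interpretation GPO: orth_sys GP "\<lambda>n \<omega>. \<omega> n"
proof
  show "sq_integrable GP (\<lambda>\<omega>. \<omega> n)" for n by (simp add: sq_integrable_def GP_mom2)
  show "n \<noteq> m \<Longrightarrow> (\<integral>\<omega>. \<omega> n * \<omega> m \<partial>GP) = 0" for n m by (rule GP_orth)
  show "(\<integral>\<omega>. (\<omega> n)\<^sup>2 \<partial>GP) \<le> 1" for n by (simp add: GP_mom2)
qed

lemma GP_char_sum:
  "char (distr GP borel (\<lambda>\<omega>. \<Sum>i<N. a i * \<omega> i)) t = exp (- (t\<^sup>2 * (\<Sum>i<N. (a i)\<^sup>2)) / 2)"
proof -
  have ind: "prob_space.indep_vars GP (\<lambda>_. borel) (\<lambda>i \<omega>. a i * \<omega> i) {..<N}"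
    using GPP.P.indep_vars_compose2[OF GPP.P.indep_vars_subset[OF GP_indep, of "{..<N}"], of "\<lambda>i x. a i * x" "\<lambda>_. borel"]
    by simp
  have "char (distr GP borel (\<lambda>\<omega>. \<Sum>i<N. a i * \<omega> i)) t = (\<Prod>i<N. char (distr GP borel (\<lambda>\<omega>. a i * \<omega> i)) t)"
    by (rule GPP.P.char_distr_sum[OF ind])
  also have "\<dots> = (\<Prod>i<N. complex_of_real (exp (- ((t * a i)\<^sup>2) / 2)))"
  proof (rule prod.cong[OF refl])
    fix i
    have "char (distr GP borel (\<lambda>\<omega>. a i * \<omega> i)) t = (CLINT \<omega>|GP. iexp (t * (a i * \<omega> i)))"
      unfolding char_def by (subst integral_distr) auto
    also have "\<dots> = (CLINT x|std_normal_distribution. iexp ((t * a i) * x))"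
      using GP_integral_coord(1)[of "\<lambda>x. iexp ((t * a i) * x)" i] by (simp add: mult.assoc)
    also have "\<dots> = char std_normal_distribution (t * a i)" by (simp add: char_def)
    also have "\<dots> = complex_of_real (exp (- ((t * a i)\<^sup>2) / 2))"
      by (simp add: char_std_normal_distribution)
    finally show "char (distr GP borel (\<lambda>\<omega>. a i * \<omega> i)) t = complex_of_real (exp (- ((t * a i)\<^sup>2) / 2))" .
  qed
  also have "\<dots> = complex_of_real (exp (\<Sum>i<N. - ((t * a i)\<^sup>2) / 2))"
    by (simp add: exp_sum)
  also have "(\<Sum>i<N. - ((t * a i)\<^sup>2) / 2) = - (t\<^sup>2 * (\<Sum>i<N. (a i)\<^sup>2)) / 2"
    by (simp add: sum_divide_distrib[symmetric] sum_negf sum_distrib_left power_mult_distrib)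
  finally show ?thesis .
qed



abbreviation crd :: "nat \<Rightarrow> (nat \<Rightarrow> real) \<Rightarrow> real" where
  "crd \<equiv> (\<lambda>n \<omega>. \<omega> n)"

lemma NN_partial_lim:
  assumes sa: "summable (\<lambda>n. (a n)\<^sup>2)"
  shows "(\<lambda>j. \<Sum>n<NN a j. (a n)\<^sup>2) \<longlonglongrightarrow> (\<Sum>n. (a n)\<^sup>2)"
proof (rule tendsto_sandwich[where f="\<lambda>j. (\<Sum>n. (a n)\<^sup>2) - (1/16)^j" and h="\<lambda>j. (\<Sum>n. (a n)\<^sup>2)"])
  show "\<forall>\<^sub>F j in sequentially. (\<Sum>n. (a n)\<^sup>2) - (1/16)^j \<le> (\<Sum>n<NN a j. (a n)\<^sup>2)"
  proof (intro always_eventually allI)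
    fix j
    have "(\<Sum>n<m. (a n)\<^sup>2) \<le> (\<Sum>n<NN a j. (a n)\<^sup>2) + (1/16)^j" for m
    proof (cases "m \<le> NN a j")
      case True
      then have "(\<Sum>n<m. (a n)\<^sup>2) \<le> (\<Sum>n<NN a j. (a n)\<^sup>2)"
        by (intro sum_mono2) auto
      moreover have "0 \<le> (1/16::real)^j" by simp
      ultimately show ?thesis by linarith
    next
      case False
      then have "(\<Sum>n<m. (a n)\<^sup>2) - (\<Sum>n<NN a j. (a n)\<^sup>2) = (\<Sum>n\<in>{NN a j..<m}. (a n)\<^sup>2)"
        using PS_diff[of "NN a j" m "\<lambda>n. (a n)" "\<lambda>n x. a n" undefined]
        by (simp add: PS_def power2_eq_square)
      then show ?thesis using NN_prop[OF sa, of j m] by simp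
    qed
    then have "(\<Sum>n. (a n)\<^sup>2) \<le> (\<Sum>n<NN a j. (a n)\<^sup>2) + (1/16)^j"
      by (intro LIMSEQ_le_const2[OF summable_LIMSEQ[OF sa]]) auto
    then show "(\<Sum>n. (a n)\<^sup>2) - (1/16)^j \<le> (\<Sum>n<NN a j. (a n)\<^sup>2)" by simp
  qed
  show "\<forall>\<^sub>F j in sequentially. (\<Sum>n<NN a j. (a n)\<^sup>2) \<le> (\<Sum>n. (a n)\<^sup>2)"
    by (intro always_eventually allI sum_le_suminf[OF sa]) auto
  have "(\<lambda>j. (\<Sum>n. (a n)\<^sup>2) - (1/16::real)^j) \<longlonglongrightarrow> (\<Sum>n. (a n)\<^sup>2) - 0"
    by (intro tendsto_diff tendsto_const LIMSEQ_power_zero) auto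
  then show "(\<lambda>j. (\<Sum>n. (a n)\<^sup>2) - (1/16::real)^j) \<longlonglongrightarrow> (\<Sum>n. (a n)\<^sup>2)" by simp
qed auto

lemma GP_char_RF:
  assumes sa: "summable (\<lambda>n. (a n)\<^sup>2)"
  shows "char (distr GP borel (RF a crd)) t = exp (- (t\<^sup>2 * (\<Sum>n. (a n)\<^sup>2)) / 2)"
proof -
  have [measurable]: "RF a crd \<in> borel_measurable GP" by (rule GPO.RF_meas)
  have c1: "char (distr GP borel (RF a crd)) t = (CLINT \<omega>|GP. iexp (t * RF a crd \<omega>))"
    unfolding char_def by (subst integral_distr) auto
  have L1: "(\<lambda>j. CLINT \<omega>|GP. iexp (t * PS a crd (NN a j) \<omega>)) \<longlonglongrightarrow> (CLINT \<omega>|GP. iexp (t * RF a crd \<omega>))"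
  proof (rule integral_dominated_convergence[where w="\<lambda>_. 1"])
    show "AE \<omega> in GP. (\<lambda>j. iexp (t * PS a crd (NN a j) \<omega>)) \<longlonglongrightarrow> iexp (t * RF a crd \<omega>)"
      using GPO.RF_AE_lim[OF sa]
      by (rule AE_mp) (auto intro!: AE_I2 tendsto_intros)
    show "AE \<omega> in GP. norm (iexp (t * PS a crd (NN a j) \<omega>)) \<le> 1" for j
      by (auto simp: norm_exp_i_times[of "t * PS a crd (NN a j) _", simplified])
    show "integrable GP (\<lambda>_. 1::real)" by (rule GPP.P.integrable_const)
  qed auto
  have c2: "(CLINT \<omega>|GP. iexp (t * PS a crd N \<omega>)) = exp (- (t\<^sup>2 * (\<Sum>n<N. (a n)\<^sup>2)) / 2)" for N
  proof -
    have "(CLINT \<omega>|GP. iexp (t * PS a crd N \<omega>)) = char (distr GP borel (\<lambda>\<omega>. \<Sum>i<N. a i * \<omega> i)) t"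
      unfolding char_def PS_def by (subst integral_distr) auto
    then show ?thesis by (simp add: GP_char_sum)
  qed
  have L2: "(\<lambda>j. CLINT \<omega>|GP. iexp (t * PS a crd (NN a j) \<omega>)) \<longlonglongrightarrow> complex_of_real (exp (- (t\<^sup>2 * (\<Sum>n. (a n)\<^sup>2)) / 2))"
    unfolding c2 by (intro tendsto_intros NN_partial_lim[OF sa]) simp_all
  show ?thesis using c1 LIMSEQ_unique[OF L1 L2] by simp
qed

lemma GP_RF_gaussian:
  assumes sa: "summable (\<lambda>n. (a n)\<^sup>2)"
  shows "centered_gaussian GP (RF a crd)"
proof -
  have [measurable]: "RF a crd \<in> borel_measurable GP" by (rule GPO.RF_meas)
  define s where "s = (\<Sum>n. (a n)\<^sup>2)"
  have s0: "s \<ge> 0" unfolding s_def by (intro suminf_nonneg sa) auto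
  show ?thesis
  proof (cases "s = 0")
    case True
    then have a0: "a n = 0" for n
      using suminf_eq_zero_iff[OF sa] unfolding s_def by auto
    have "RF a crd = (\<lambda>\<omega>. 0)"
      by (rule ext) (simp add: RF_def PS_def a0)
    then show ?thesis unfolding centered_gaussian_def
      by (intro conjI exI[of _ 0]) (auto simp: GPP.P.distr_const)
  next
    case False
    then have sp: "s > 0" using s0 by simp
    define \<sigma> where "\<sigma> = sqrt s"
    have sg: "\<sigma> > 0" unfolding \<sigma>_def using sp by simp
    define Z where "Z = (\<lambda>\<omega>. RF a crd \<omega> / \<sigma>)"
    have [measurable]: "Z \<in> borel_measurable GP" unfolding Z_def by measurable
    have "char (distr GP borel Z) = char std_normal_distribution"
    proof
      fix t
      have "char (distr GP borel Z) t = (CLINT \<omega>|GP. iexp ((t / \<sigma>) * RF a crd \<omega>))"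
        unfolding char_def Z_def by (subst integral_distr) auto
      also have "\<dots> = char (distr GP borel (RF a crd)) (t / \<sigma>)"
        unfolding char_def by (subst integral_distr) auto
      also have "\<dots> = exp (- ((t/\<sigma>)\<^sup>2 * s) / 2)" by (simp add: GP_char_RF[OF sa] s_def)
      also have "(t/\<sigma>)\<^sup>2 * s = t\<^sup>2" using sp unfolding \<sigma>_def by (simp add: power_divide)
      finally show "char (distr GP borel Z) t = char std_normal_distribution t"
        by (simp add: char_std_normal_distribution)
    qed
    then have "distr GP borel Z = std_normal_distribution"
      by (intro Levy_uniqueness real_dist_normal_dist GPP.P.real_distribution_distr) auto
    then have "distr GP lborel Z = density lborel std_normal_density"
      by (metis distr_cong sets_lborel)
    then have "distributed GP lborel Z std_normal_density"
      unfolding distributed_def by auto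
    then have "distributed GP lborel (\<lambda>x. (RF a crd x - 0) / \<sigma>) std_normal_density"
      by (simp add: Z_def)
    then have "distributed GP lborel (RF a crd) (normal_density 0 \<sigma>)"
      using GPP.P.normal_standard_normal_convert[OF sg, of "RF a crd" 0] by simp
    then have "distr GP lborel (RF a crd) = density lborel (normal_density 0 \<sigma>)"
      unfolding distributed_def by auto
    then have "distr GP borel (RF a crd) = density lborel (normal_density 0 \<sigma>)"
      by (metis distr_cong sets_lborel)
    then show ?thesis unfolding centered_gaussian_def
      using sg by (intro conjI exI[of _ \<sigma>]) auto
  qed
qed

lemma GP_RF_cov:
  assumes sa: "summable (\<lambda>n. (a n)\<^sup>2)" and sb: "summable (\<lambda>n. (b n)\<^sup>2)"
  shows "integrable GP (\<lambda>\<omega>. RF a crd \<omega> * RF b crd \<omega>)"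
    and "(\<lambda>n. a n * b n) sums (\<integral>\<omega>. RF a crd \<omega> * RF b crd \<omega> \<partial>GP)"
  using sqi_mult[OF GPO.RF_sqi[OF sa] GPO.RF_sqi[OF sb]] apply simp
  by (rule GPO.RF_cov[OF sa sb GP_mom2(1)])



locale nu_set =
  fixes \<nu> :: "'a::polish_space measure" and \<kappa> :: "'a \<Rightarrow> 'a \<Rightarrow> real"
  assumes lc: "locally_compact_space (euclidean :: 'a topology)"
    and rad: "radon_measure \<nu>"
    and bk: "bounded_sa_nonneg_kernel \<nu> \<kappa>"
    and ltc: "locally_trace_class_sqrt_kernel \<nu> \<kappa>"
begin

lemma sets_nu[measurable_cong, simp]: "sets \<nu> = sets borel"
  using rad by (simp add: radon_measure_def)

lemma space_nu[simp]: "space \<nu> = UNIV"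
  using sets_eq_imp_space_eq[OF sets_nu] by simp

lemma kappa_meas[measurable]: "(\<lambda>(x, y). \<kappa> x y) \<in> borel_measurable (\<nu> \<Otimes>\<^sub>M \<nu>)"
  using bk by (simp add: bounded_sa_nonneg_kernel_def)

lemma cover: "\<exists>C. countable C \<and> (\<forall>B\<in>C. open B \<and> B \<in> rel_compact_borel \<and> emeasure \<nu> B < \<infinity>) \<and> \<Union>C = UNIV"
proof -
  obtain \<B> :: "'a set set" where cB: "countable \<B>" and bB: "topological_basis \<B>"
    using ex_countable_basis by blast
  define C where "C = {B \<in> \<B>. \<exists>K. compact K \<and> B \<subseteq> K}"
  have "countable C" unfolding C_def using cB by auto
  moreover have "open B \<and> B \<in> rel_compact_borel \<and> emeasure \<nu> B < \<infinity>" if "B \<in> C" for B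
  proof -
    from that obtain K where B: "B \<in> \<B>" and K: "compact K" "B \<subseteq> K" unfolding C_def by blast
    have oB: "open B" using bB B by (rule topological_basis_open)
    have "closure B \<subseteq> K" using K by (intro closure_minimal compact_imp_closed) auto
    have "closure B = closure B \<inter> K" using \<open>closure B \<subseteq> K\<close> by auto
    then have cc: "compact (closure B)" using K closed_Int_compact[of "closure B" K] by simp
    have "emeasure \<nu> B \<le> emeasure \<nu> (closure B)"
      by (intro emeasure_mono closure_subset) auto
    also have "\<dots> < \<infinity>" using rad cc by (simp add: radon_measure_def)
    finally show ?thesis using oB by (auto simp: rel_compact_borel_def cc)
  qed
  moreover have "\<Union>C = UNIV"
  proof safe
    fix x :: 'a
    have "\<exists>U K. openin euclidean U \<and> compactin euclidean K \<and> x \<in> U \<and> U \<subseteq> K"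
      using lc unfolding locally_compact_space_def by simp
    then obtain U K where "openin euclidean U" "compactin euclidean K" "x \<in> U" "U \<subseteq> K"
      by blast
    then have U: "open U" "compact K" "x \<in> U" "U \<subseteq> K" by auto
    obtain B where "B \<in> \<B>" "x \<in> B" "B \<subseteq> U" using topological_basisE[OF bB U(1,3)] by blast
    then have "B \<in> C" unfolding C_def using U by blast
    then show "x \<in> \<Union>C" using \<open>x \<in> B\<close> by blast
  qed auto
  ultimately show ?thesis by blast
qed

lemma sigfin: "sigma_finite_measure \<nu>"
proof
  obtain C where C: "countable C" "\<And>B. B\<in>C \<Longrightarrow> open B \<and> B \<in> rel_compact_borel \<and> emeasure \<nu> B < \<infinity>" "\<Union>C = UNIV"
    using cover by blast
  show "\<exists>A. countable A \<and> A \<subseteq> sets \<nu> \<and> \<Union>A = space \<nu> \<and> (\<forall>a\<in>A. emeasure \<nu> a \<noteq> \<infinity>)"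
    using C by (intro exI[of _ C]) (auto dest: less_imp_neq)
qed

end



context nu_set
begin

lemma gen_exists:
  "\<exists>g::nat \<Rightarrow> 'a set. (\<forall>n. g n \<in> sets borel \<and> emeasure \<nu> (g n) < \<infinity>) \<and> Int_stable (range g) \<and>
     sigma_sets UNIV (range g) = sets borel \<and> (\<exists>A::nat \<Rightarrow> 'a set. range A \<subseteq> range g \<and> (\<Union>i. A i) = UNIV)"
proof -
  obtain C where C: "countable C" "\<And>B. B\<in>C \<Longrightarrow> open B \<and> B \<in> rel_compact_borel \<and> emeasure \<nu> B < \<infinity>" "\<Union>C = UNIV"
    using cover by blast
  obtain \<B> :: "'a set set" where cB: "countable \<B>" and bB: "topological_basis \<B>"
    using ex_countable_basis by blast
  define \<F> where "\<F> = {F. finite F \<and> F \<subseteq> \<B> \<union> C \<and> F \<inter> C \<noteq> {}}"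
  define E where "E = Inter ` \<F>"
  have CE: "C \<subseteq> E"
  proof
    fix c assume "c \<in> C"
    then have "{c} \<in> \<F>" unfolding \<F>_def by auto
    then show "c \<in> E" unfolding E_def by (rule image_eqI[rotated]) simp
  qed
  have Cne: "C \<noteq> {}" using C(3) by auto
  then have Ene: "E \<noteq> {}" using CE by auto
  have cE: "countable E"
  proof -
    have "\<F> \<subseteq> {F. finite F \<and> F \<subseteq> \<B> \<union> C}" unfolding \<F>_def by auto
    moreover have "countable {F. finite F \<and> F \<subseteq> \<B> \<union> C}"
      using cB C(1) by (intro countable_Collect_finite_subset) auto
    ultimately show ?thesis unfolding E_def by (intro countable_image) (rule countable_subset)
  qed
  have openE: "open X" if "X \<in> E" for X
  proof -
    from that obtain F where F: "F \<in> \<F>" "X = \<Inter>F" unfolding E_def by blast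
    have "\<forall>b\<in>F. open b" using F C(2) bB topological_basis_open unfolding \<F>_def by blast
    then show ?thesis using F unfolding \<F>_def by (auto intro!: open_Inter)
  qed
  have finE: "emeasure \<nu> X < \<infinity>" if "X \<in> E" for X
  proof -
    from that obtain F where F: "F \<in> \<F>" "X = \<Inter>F" unfolding E_def by blast
    then obtain c where c: "c \<in> F" "c \<in> C" unfolding \<F>_def by blast
    have "emeasure \<nu> X \<le> emeasure \<nu> c"
      using F c C(2)[of c] by (intro emeasure_mono) auto
    then show ?thesis using C(2)[OF c(2)] by (simp add: le_less_trans)
  qed
  have isE: "Int_stable E"
  proof (rule Int_stableI)
    fix a b assume "a \<in> E" "b \<in> E"
    then obtain F1 F2 where "F1 \<in> \<F>" "a = \<Inter>F1" "F2 \<in> \<F>" "b = \<Inter>F2" unfolding E_def by blast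
    then have "F1 \<union> F2 \<in> \<F>" "a \<inter> b = \<Inter>(F1 \<union> F2)" unfolding \<F>_def by auto
    then show "a \<inter> b \<in> E" unfolding E_def by blast
  qed
  have sigE: "sigma_sets UNIV E = sets borel"
  proof
    show "sigma_sets UNIV E \<subseteq> sets borel"
    proof -
      have "E \<subseteq> sets borel" using openE by auto
      then show ?thesis using sets.sigma_sets_subset[of E borel] by simp
    qed
    have "sets borel = sigma_sets UNIV \<B>"
      by (subst borel_eq_countable_basis[OF cB bB]) simp
    also have "\<dots> \<subseteq> sigma_sets UNIV E"
    proof (rule sigma_sets_mono)
      show "\<B> \<subseteq> sigma_sets UNIV E"
      proof
        fix b assume b: "b \<in> \<B>"
        have "b = \<Union>((\<lambda>c. b \<inter> c) ` C)" using C(3) by auto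
        also have "\<dots> \<in> sigma_sets UNIV E"
        proof (rule sigma_sets_UNION)
          show "countable ((\<lambda>c. b \<inter> c) ` C)" using C(1) by simp
          fix X assume "X \<in> (\<lambda>c. b \<inter> c) ` C"
          then obtain c where c: "c \<in> C" "X = b \<inter> c" by blast
          then have "{b, c} \<in> \<F>" "X = \<Inter>{b, c}" using b unfolding \<F>_def by auto
          then have "X \<in> E" unfolding E_def by blast
          then show "X \<in> sigma_sets UNIV E" by (rule sigma_sets.Basic)
        qed
        finally show "b \<in> sigma_sets UNIV E" .
      qed
    qed
    finally show "sets borel \<subseteq> sigma_sets UNIV E" .
  qed
  define g where "g = from_nat_into E"
  have rg: "range g = E" unfolding g_def by (rule range_from_nat_into[OF Ene cE])
  define A where "A = from_nat_into C"
  have rA: "range A = C" unfolding A_def by (rule range_from_nat_into[OF Cne C(1)])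
  have g1: "\<forall>n. g n \<in> sets borel \<and> emeasure \<nu> (g n) < \<infinity>"
  proof
    fix n
    have "g n \<in> E" using rg by blast
    then show "g n \<in> sets borel \<and> emeasure \<nu> (g n) < \<infinity>" using openE finE by auto
  qed
  have g2: "\<exists>A::nat \<Rightarrow> 'a set. range A \<subseteq> range g \<and> (\<Union>i. A i) = UNIV"
  proof -
    have "range A \<subseteq> range g \<and> (\<Union>i. A i) = UNIV" using rA rg CE C(3) by simp
    then show ?thesis by blast
  qed
  show ?thesis
  proof (rule exI[of _ g])
    show "(\<forall>n. g n \<in> sets borel \<and> emeasure \<nu> (g n) < \<infinity>) \<and> Int_stable (range g) \<and>
     sigma_sets UNIV (range g) = sets borel \<and> (\<exists>A::nat \<Rightarrow> 'a set. range A \<subseteq> range g \<and> (\<Union>i. A i) = UNIV)"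
      using g1 g2 isE sigE rg by simp
  qed
qed

lemma completeness:
  assumes g: "\<And>n. g n \<in> sets borel \<and> emeasure \<nu> (g n) < \<infinity>" and isg: "Int_stable (range g)"
    and sg: "sigma_sets UNIV (range g) = sets borel" and A: "range (A::nat \<Rightarrow> 'a set) \<subseteq> range g" "(\<Union>i. A i) = UNIV"
    and h: "sq_integrable \<nu> h" and ho: "\<And>n. (\<integral>z. h z * indicator (g n) z \<partial>\<nu>) = 0"
  shows "AE z in \<nu>. h z = 0"
proof -
  interpret sigma_finite_measure \<nu> by (rule sigfin)
  have hm[measurable]: "h \<in> borel_measurable \<nu>" using h by (simp add: sq_integrable_def)
  have intX: "integrable \<nu> (\<lambda>z. h z * indicator X z)" if "X \<in> range g" for X
  proof -
    from that obtain n where "X = g n" by blast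
    then show ?thesis using sqi_mult[OF h sqi_indicator[of "g n" \<nu>]] g[of n] by simp
  qed
  have eqX: "emeasure (density \<nu> (\<lambda>x. ennreal (h x))) X = emeasure (density \<nu> (\<lambda>x. ennreal (- h x))) X"
    if X: "X \<in> range g" for X
  proof -
    have Xs: "X \<in> sets \<nu>" using X g by auto
    define u where "u z = h z * indicator X z" for z
    have iu: "integrable \<nu> u" unfolding u_def by (rule intX[OF X])
    have u0: "(\<integral>z. u z \<partial>\<nu>) = 0" using X ho unfolding u_def by auto
    have f1: "(\<integral>\<^sup>+z. ennreal (u z) \<partial>\<nu>) < \<top>"
    proof -
      have "(\<integral>\<^sup>+z. ennreal (u z) \<partial>\<nu>) \<le> (\<integral>\<^sup>+z. ennreal (norm (u z)) \<partial>\<nu>)"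
        by (intro nn_integral_mono ennreal_leI) auto
      also have "\<dots> < \<top>" using iu unfolding integrable_iff_bounded by simp
      finally show ?thesis .
    qed
    have f2: "(\<integral>\<^sup>+z. ennreal (- u z) \<partial>\<nu>) < \<top>"
    proof -
      have "(\<integral>\<^sup>+z. ennreal (- u z) \<partial>\<nu>) \<le> (\<integral>\<^sup>+z. ennreal (norm (u z)) \<partial>\<nu>)"
        by (intro nn_integral_mono ennreal_leI) auto
      also have "\<dots> < \<top>" using iu unfolding integrable_iff_bounded by simp
      finally show ?thesis .
    qed
    have "enn2real (\<integral>\<^sup>+z. ennreal (u z) \<partial>\<nu>) = enn2real (\<integral>\<^sup>+z. ennreal (- u z) \<partial>\<nu>)"
      using u0 iu by (simp add: real_lebesgue_integral_def)
    then have eq: "(\<integral>\<^sup>+z. ennreal (u z) \<partial>\<nu>) = (\<integral>\<^sup>+z. ennreal (- u z) \<partial>\<nu>)"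
      using ennreal_enn2real[OF f1] ennreal_enn2real[OF f2] by metis
    have "emeasure (density \<nu> (\<lambda>x. ennreal (h x))) X = (\<integral>\<^sup>+z. ennreal (u z) \<partial>\<nu>)"
      using Xs unfolding u_def by (subst emeasure_density) (auto intro!: nn_integral_cong split: split_indicator)
    also note eq
    also have "(\<integral>\<^sup>+z. ennreal (- u z) \<partial>\<nu>) = emeasure (density \<nu> (\<lambda>x. ennreal (- h x))) X"
      using Xs unfolding u_def by (subst emeasure_density) (auto intro!: nn_integral_cong split: split_indicator)
    finally show ?thesis .
  qed
  have "density \<nu> (\<lambda>x. ennreal (h x)) = density \<nu> (\<lambda>x. ennreal (- h x))"
  proof (rule measure_eqI_generator_eq[OF isg _ eqX _ _ A(1) A(2)])
    show "range g \<subseteq> Pow UNIV" by simp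
    show "sets (density \<nu> (\<lambda>x. ennreal (h x))) = sigma_sets UNIV (range g)" using sg by simp
    show "sets (density \<nu> (\<lambda>x. ennreal (- h x))) = sigma_sets UNIV (range g)" using sg by simp
    fix i
    have Ai: "A i \<in> range g" using A(1) by auto
    then have As: "A i \<in> sets \<nu>" using g by auto
    have "emeasure (density \<nu> (\<lambda>x. ennreal (h x))) (A i) = (\<integral>\<^sup>+z. ennreal (h z * indicator (A i) z) \<partial>\<nu>)"
      using As by (subst emeasure_density) (auto intro!: nn_integral_cong split: split_indicator)
    also have "\<dots> \<le> (\<integral>\<^sup>+z. ennreal (norm (h z * indicator (A i) z)) \<partial>\<nu>)"
      by (intro nn_integral_mono ennreal_leI) auto
    also have "\<dots> < \<infinity>" using intX[OF Ai] unfolding integrable_iff_bounded by simp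
    finally show "emeasure (density \<nu> (\<lambda>x. ennreal (h x))) (A i) \<noteq> \<infinity>" by simp
  qed
  then have "AE z in \<nu>. ennreal (h z) = ennreal (- h z)"
    by (intro density_unique) auto
  then show ?thesis
  proof (rule AE_mp, intro AE_I2 impI)
    fix z assume eq: "ennreal (h z) = ennreal (- h z)"
    show "h z = 0"
    proof (rule ccontr)
      assume "h z \<noteq> 0"
      then consider "h z > 0" | "h z < 0" by linarith
      then show False
      proof cases
        case 1
        then have "ennreal (- h z) = 0" by (simp add: ennreal_neg)
        then have "ennreal (h z) = 0" using eq by simp
        then show False using 1 by (simp add: ennreal_eq_0_iff)
      next
        case 2
        then have "ennreal (h z) = 0" by (simp add: ennreal_neg)
        then have "ennreal (- h z) = 0" using eq by simp
        then show False using 2 by (simp add: ennreal_eq_0_iff)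
      qed
    qed
  qed
qed

definition H :: "'a \<Rightarrow> ennreal" where
  "H x = (\<integral>\<^sup>+y. ennreal ((\<kappa> x y)\<^sup>2) \<partial>\<nu>)"

lemma H_meas[measurable]: "H \<in> borel_measurable \<nu>"
proof -
  interpret sigma_finite_measure \<nu> by (rule sigfin)
  show ?thesis unfolding H_def by measurable
qed

lemma kx_meas[measurable]: "\<kappa> x \<in> borel_measurable \<nu>"
  by measurable

lemma AE_H: "AE x in \<nu>. H x < \<infinity>"
proof -
  obtain C where C: "countable C" "\<And>B. B\<in>C \<Longrightarrow> open B \<and> B \<in> rel_compact_borel \<and> emeasure \<nu> B < \<infinity>" "\<Union>C = UNIV"
    using cover by blast
  have "AE x in \<nu>. \<forall>B\<in>C. x \<in> B \<longrightarrow> H x < \<infinity>"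
  proof (rule AE_ball_countable[THEN iffD2, OF C(1)], intro ballI)
    fix B assume B: "B \<in> C"
    then have "B \<in> rel_compact_borel" using C(2) by blast
    then have fin: "(\<integral>\<^sup>+x. indicator B x * H x \<partial>\<nu>) < \<infinity>"
      using ltc unfolding locally_trace_class_sqrt_kernel_def H_def by blast
    have Bs: "B \<in> sets \<nu>" using C(2)[OF B] by auto
    have "AE x in \<nu>. indicator B x * H x \<noteq> \<infinity>"
      using fin Bs by (intro nn_integral_PInf_AE) auto
    then show "AE x in \<nu>. x \<in> B \<longrightarrow> H x < \<infinity>"
      by (rule AE_mp) (auto intro!: AE_I2 simp: less_top)
  qed
  then show ?thesis
    by (rule AE_mp) (use C(3) in \<open>auto intro!: AE_I2\<close>)
qed

lemma H_sqi: "H x < \<infinity> \<Longrightarrow> sq_integrable \<nu> (\<kappa> x)"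
  unfolding sq_integrable_def H_def
  by (auto intro!: integrableI_nonneg)

end



context nu_set
begin

lemma main:
  shows "\<exists>(P :: (nat \<Rightarrow> real) measure) (Y :: 'a \<Rightarrow> (nat \<Rightarrow> real) \<Rightarrow> real).
           prob_space P \<and>
           (\<lambda>(x,\<omega>). Y x \<omega>) \<in> borel_measurable (\<nu> \<Otimes>\<^sub>M P) \<and>
           (AE x in \<nu>. centered_gaussian P (Y x)) \<and>
           (AE z in \<nu> \<Otimes>\<^sub>M \<nu>. integrable P (\<lambda>\<omega>. Y (fst z) \<omega> * Y (snd z) \<omega>) \<and>
               (\<integral>\<omega>. Y (fst z) \<omega> * Y (snd z) \<omega> \<partial>P) = square_kernel \<nu> \<kappa> (fst z) (snd z)) \<and>
           (AE x in \<nu>. integrable P (\<lambda>\<omega>. Y x \<omega> * Y x \<omega>) \<and>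
               (\<integral>\<omega>. Y x \<omega> * Y x \<omega> \<partial>P) = square_kernel \<nu> \<kappa> x x)"
proof -
  interpret sf: sigma_finite_measure \<nu> by (rule sigfin)
  from gen_exists obtain g :: "nat \<Rightarrow> 'a set" where G: "(\<forall>n. g n \<in> sets borel \<and> emeasure \<nu> (g n) < \<infinity>) \<and> Int_stable (range g) \<and>
     sigma_sets UNIV (range g) = sets borel \<and> (\<exists>A::nat \<Rightarrow> 'a set. range A \<subseteq> range g \<and> (\<Union>i. A i) = UNIV)"
    by (elim exE)
  have g: "\<And>n. g n \<in> sets borel \<and> emeasure \<nu> (g n) < \<infinity>" using G by simp
  have isg: "Int_stable (range g)" using G by simp
  have sg: "sigma_sets UNIV (range g) = sets borel" using G by simp
  from G obtain A :: "nat \<Rightarrow> 'a set" where A: "range A \<subseteq> range g" "(\<Union>i. A i) = UNIV"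
    by (elim conjE exE) simp
  define d where "d n = (indicator (g n) :: 'a \<Rightarrow> real)" for n
  interpret gsc: gs_complete \<nu> d
  proof
    show "sq_integrable \<nu> (d n)" for n unfolding d_def using g[of n] by (intro sqi_indicator) auto
    show "AE z in \<nu>. h z = 0" if "sq_integrable \<nu> h" "\<And>n. (\<integral>z. h z * d n z \<partial>\<nu>) = 0" for h
      using completeness[OF g isg sg A that(1)] that(2) unfolding d_def by blast
  qed
  define c where "c n x = gsc.coef (\<kappa> x) n" for n x
  define Y where "Y x = RF (\<lambda>n. c n x) crd" for x
  define Gd where "Gd = {x. H x < \<infinity>}"
  have Gd_sets: "Gd \<in> sets \<nu>" unfolding Gd_def by measurable
  have AE_Gd: "AE x in \<nu>. x \<in> Gd" using AE_H unfolding Gd_def by simp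
  have sqk: "sq_integrable \<nu> (\<kappa> x)" if "x \<in> Gd" for x using that H_sqi unfolding Gd_def by simp
  have sumc: "summable (\<lambda>n. (c n x)\<^sup>2)" if "x \<in> Gd" for x
    unfolding c_def by (rule gsc.coef_summable[OF sqk[OF that]])
  have cov: "integrable GP (\<lambda>\<omega>. Y x \<omega> * Y y \<omega>) \<and> (\<integral>\<omega>. Y x \<omega> * Y y \<omega> \<partial>GP) = square_kernel \<nu> \<kappa> x y"
    if "x \<in> Gd" "y \<in> Gd" for x y
  proof
    show "integrable GP (\<lambda>\<omega>. Y x \<omega> * Y y \<omega>)"
      unfolding Y_def by (rule GP_RF_cov(1)[OF sumc[OF that(1)] sumc[OF that(2)]])
    have s1: "(\<lambda>n. c n x * c n y) sums (\<integral>\<omega>. Y x \<omega> * Y y \<omega> \<partial>GP)"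
      unfolding Y_def by (rule GP_RF_cov(2)[OF sumc[OF that(1)] sumc[OF that(2)]])
    have s2: "(\<lambda>n. c n x * c n y) sums (\<integral>z. \<kappa> x z * \<kappa> y z \<partial>\<nu>)"
      unfolding c_def by (rule gsc.polar[OF sqk[OF that(1)] sqk[OF that(2)]])
    show "(\<integral>\<omega>. Y x \<omega> * Y y \<omega> \<partial>GP) = square_kernel \<nu> \<kappa> x y"
      using sums_unique2[OF s1 s2] by (simp add: square_kernel_def)
  qed
  have e_meas[measurable]: "gse \<nu> d n \<in> borel_measurable \<nu>" for n
    using gsc.sqi_e[of n] by (simp add: sq_integrable_def)
  have c_meas[measurable]: "c n \<in> borel_measurable \<nu>" for n
    unfolding c_def gsc.coef_def by measurable
  have c_meas2[measurable]: "(\<lambda>p. c n (fst p)) \<in> borel_measurable (\<nu> \<Otimes>\<^sub>M GP)" for n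
    by measurable
  have NN_meas[measurable]: "(\<lambda>p. NN (\<lambda>n. c n (fst p)) j) \<in> measurable (\<nu> \<Otimes>\<^sub>M GP) (count_space UNIV)" for j
    unfolding NN_def by measurable
  have PS_meas: "(\<lambda>p. PS (\<lambda>n. c n (fst p)) crd (NN (\<lambda>n. c n (fst p)) j) (snd p)) \<in> borel_measurable (\<nu> \<Otimes>\<^sub>M GP)" for j
  proof (rule measurable_compose_countable'[where I=UNIV and g="\<lambda>p. NN (\<lambda>n. c n (fst p)) j"
        and f="\<lambda>i p. PS (\<lambda>n. c n (fst p)) crd i (snd p)"])
    show "(\<lambda>p. PS (\<lambda>n. c n (fst p)) crd i (snd p)) \<in> borel_measurable (\<nu> \<Otimes>\<^sub>M GP)" for i
      unfolding PS_def by measurable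
  qed auto
  have Ymeas: "(\<lambda>(x,\<omega>). Y x \<omega>) \<in> borel_measurable (\<nu> \<Otimes>\<^sub>M GP)"
  proof -
    have "(\<lambda>(x,\<omega>). Y x \<omega>) = (\<lambda>p. lim (\<lambda>j. PS (\<lambda>n. c n (fst p)) crd (NN (\<lambda>n. c n (fst p)) j) (snd p)))"
      by (auto simp: Y_def RF_def)
    also have "\<dots> \<in> borel_measurable (\<nu> \<Otimes>\<^sub>M GP)"
      by (rule borel_measurable_lim_metric[OF PS_meas])
    finally show ?thesis .
  qed
  have AE2: "AE z in \<nu> \<Otimes>\<^sub>M \<nu>. fst z \<in> Gd \<and> snd z \<in> Gd"
  proof (rule AE_I')
    have N: "UNIV - Gd \<in> null_sets \<nu>"
    proof -
      have "UNIV - Gd \<in> sets \<nu>" using Gd_sets by (metis sets.compl_sets space_nu)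
      then show ?thesis using AE_iff_null_sets[of "UNIV - Gd" \<nu>] AE_Gd by simp
    qed
    show "(UNIV - Gd) \<times> UNIV \<union> UNIV \<times> (UNIV - Gd) \<in> null_sets (\<nu> \<Otimes>\<^sub>M \<nu>)"
      using N by (intro null_sets.Un sf.times_in_null_sets1 sf.times_in_null_sets2) auto
    show "{z \<in> space (\<nu> \<Otimes>\<^sub>M \<nu>). \<not> (fst z \<in> Gd \<and> snd z \<in> Gd)} \<subseteq> (UNIV - Gd) \<times> UNIV \<union> UNIV \<times> (UNIV - Gd)"
      by auto
  qed
  show ?thesis
  proof (intro exI[of _ GP] exI[of _ Y] conjI)
    show "prob_space GP" by (rule GP_prob)
    show "(\<lambda>(x,\<omega>). Y x \<omega>) \<in> borel_measurable (\<nu> \<Otimes>\<^sub>M GP)" by (rule Ymeas)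
    show "AE x in \<nu>. centered_gaussian GP (Y x)"
      using AE_Gd by (rule AE_mp) (auto intro!: AE_I2 GP_RF_gaussian sumc simp: Y_def)
    show "AE z in \<nu> \<Otimes>\<^sub>M \<nu>. integrable GP (\<lambda>\<omega>. Y (fst z) \<omega> * Y (snd z) \<omega>) \<and>
               (\<integral>\<omega>. Y (fst z) \<omega> * Y (snd z) \<omega> \<partial>GP) = square_kernel \<nu> \<kappa> (fst z) (snd z)"
      using AE2 by (rule AE_mp) (auto intro!: AE_I2 cov)
    show "AE x in \<nu>. integrable GP (\<lambda>\<omega>. Y x \<omega> * Y x \<omega>) \<and>
               (\<integral>\<omega>. Y x \<omega> * Y x \<omega> \<partial>GP) = square_kernel \<nu> \<kappa> x x"
      using AE_Gd by (rule AE_mp) (auto intro!: AE_I2 cov)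
  qed
qed

end

theorem proposition3p1:
  fixes \<nu> :: "'a::polish_space measure"
    and \<kappa> :: "'a \<Rightarrow> 'a \<Rightarrow> real"
  assumes "locally_compact_space (euclidean :: 'a topology)"
    and "radon_measure \<nu>"
    and "non_atomic \<nu>"
    and "bounded_sa_nonneg_kernel \<nu> \<kappa>"
    and "locally_trace_class_sqrt_kernel \<nu> \<kappa>"
  shows "\<exists>(P :: (nat \<Rightarrow> real) measure) (Y :: 'a \<Rightarrow> (nat \<Rightarrow> real) \<Rightarrow> real).
           prob_space P \<and>
           (\<lambda>(x,\<omega>). Y x \<omega>) \<in> borel_measurable (\<nu> \<Otimes>\<^sub>M P) \<and>
           (AE x in \<nu>. centered_gaussian P (Y x)) \<and>
           (AE z in \<nu> \<Otimes>\<^sub>M \<nu>. integrable P (\<lambda>\<omega>. Y (fst z) \<omega> * Y (snd z) \<omega>) \<and>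
               (\<integral>\<omega>. Y (fst z) \<omega> * Y (snd z) \<omega> \<partial>P) = square_kernel \<nu> \<kappa> (fst z) (snd z)) \<and>
           (AE x in \<nu>. integrable P (\<lambda>\<omega>. Y x \<omega> * Y x \<omega>) \<and>
               (\<integral>\<omega>. Y x \<omega> * Y x \<omega> \<partial>P) = square_kernel \<nu> \<kappa> x x)"
proof -
  interpret nu_set \<nu> \<kappa>
    using assms by (simp add: nu_set_def)
  show ?thesis by (rule main)
qed


end
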